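(* Let $D>1$ be a square-free integer with $-D\equiv 2$ or $3\pmod 4$, and suppose $C(-4D)\cong(\mathbb{Z}/2\mathbb{Z})^n$ for some $n\ge 0$. Let $c=p_1^{n_1}\cdots p_k^{n_k}$ with distinct primes $p_i$ and $n_i\ge1$. Then there is a normalized solution to $x^2+Dy^2=z^2$ of the form $(a,b,c)$ if and only if all $p_i\in S$. Further, if all $p_i\in S$, there are exactly $2^{k-1}$ normalized solutions of the form $(a,b,c)$.
   Context: $S:=\{\text{odd primes } q : \left(\frac{-D}{q}\right)=1\}$, with $\left(\frac{\cdot}{q}\right)$ the Legendre symbol. A normalized solution of $x^2+Dy^2=z^2$ is a triple $(a,b,c)$ of natural numbers with $a^2+Db^2=c^2$ and $\gcd(a,b,c)=1$. $C(-4D)$ is the form class group of discriminant $-4D$ (classes of primitive positive-definite binary quadratic forms of discriminant $-4D$ under $\mathrm{SL}_2(\mathbb{Z})$-equivalence, with Dirichlet composition). *)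

theory Defs
  imports "HOL-Number_Theory.Number_Theory" "HOL-Computational_Algebra.Squarefree" "HOL-Algebra.Product_Groups" "HOL-Algebra.Elementary_Groups"
begin

type_synonym qform = "int \<times> int \<times> int"

definition qf_eval :: "qform \<Rightarrow> int \<Rightarrow> int \<Rightarrow> int" where
  "qf_eval f x y = (case f of (a, b, c) \<Rightarrow> a * x^2 + b * x * y + c * y^2)"

definition qf_disc :: "qform \<Rightarrow> int" where
  "qf_disc f = (case f of (a, b, c) \<Rightarrow> b^2 - 4 * a * c)"

definition ppd_forms :: "int \<Rightarrow> qform set" where
  "ppd_forms dd = {f. qf_disc f = dd \<and> dd < 0 \<and> fst f > 0 \<and>
     gcd (fst f) (gcd (fst (snd f)) (snd (snd f))) = 1}"

definition sl2_equiv :: "qform \<Rightarrow> qform \<Rightarrow> bool" where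
  "sl2_equiv f g \<longleftrightarrow> (\<exists>p q r s :: int. p * s - q * r = 1 \<and>
      (\<forall>x y. qf_eval g x y = qf_eval f (p * x + q * y) (r * x + s * y)))"

definition sl2_rel :: "int \<Rightarrow> (qform \<times> qform) set" where
  "sl2_rel dd = {(f, g). f \<in> ppd_forms dd \<and> g \<in> ppd_forms dd \<and> sl2_equiv f g}"

definition dirichlet_ok :: "int \<Rightarrow> qform \<Rightarrow> qform \<Rightarrow> int \<Rightarrow> bool" where
  "dirichlet_ok dd f g B \<longleftrightarrow> (case f of (a1, b1, c1) \<Rightarrow> case g of (a2, b2, c2) \<Rightarrow>
      gcd a1 (gcd a2 ((b1 + b2) div 2)) = 1 \<and>
      [B = b1] (mod 2 * a1) \<and> [B = b2] (mod 2 * a2) \<and> [B^2 = dd] (mod 4 * a1 * a2))"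

definition dirichlet_comp :: "int \<Rightarrow> qform \<Rightarrow> qform \<Rightarrow> int \<Rightarrow> qform" where
  "dirichlet_comp dd f g B = (case f of (a1, b1, c1) \<Rightarrow> case g of (a2, b2, c2) \<Rightarrow>
      (a1 * a2, B, (B^2 - dd) div (4 * a1 * a2)))"

text \<open>The form class group C(Delta): classes of primitive positive definite forms of
  discriminant Delta under SL_2(Z)-equivalence, with Dirichlet composition; the identity
  is the class of the principal form.\<close>
definition form_class_group :: "int \<Rightarrow> qform set monoid" where
  "form_class_group dd =
     \<lparr> carrier = ppd_forms dd // sl2_rel dd,
       monoid.mult = (\<lambda>U V. SOME W. W \<in> ppd_forms dd // sl2_rel dd \<and>
           (\<exists>f\<in>U. \<exists>g\<in>V. \<exists>B. dirichlet_ok dd f g B \<and> dirichlet_comp dd f g B \<in> W)),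
       one = sl2_rel dd `` {(1, if dd mod 4 = 0 then 0 else 1,
                               if dd mod 4 = 0 then - dd div 4 else (1 - dd) div 4)} \<rparr>"

definition Z2_power :: "nat \<Rightarrow> (nat \<Rightarrow> int) monoid" where
  "Z2_power n = product_group {..<n} (\<lambda>_. integer_mod_group 2)"

definition S_set :: "int \<Rightarrow> nat set" where
  "S_set D = {q. prime q \<and> odd q \<and> Legendre (- D) (int q) = 1}"

definition normalized_sol :: "int \<Rightarrow> nat \<Rightarrow> nat \<Rightarrow> nat \<Rightarrow> bool" where
  "normalized_sol D a b c \<longleftrightarrow> a > 0 \<and> b > 0 \<and> c > 0 \<and>
     int a ^ 2 + D * int b ^ 2 = int c ^ 2 \<and> gcd a (gcd b c) = 1"

end

theory Submission
  imports Defs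
begin

definition qm :: "int \<Rightarrow> int \<times> int \<Rightarrow> int \<times> int \<Rightarrow> int \<times> int" where
  "qm D z w = (fst z * fst w - D * snd z * snd w, fst z * snd w + fst w * snd z)"

definition sc :: "int \<Rightarrow> int \<times> int \<Rightarrow> (int \<times> int) set \<Rightarrow> (int \<times> int) set" where
  "sc D a S = qm D a ` S"

definition ieq :: "int \<Rightarrow> (int \<times> int) set \<Rightarrow> (int \<times> int) set \<Rightarrow> bool" where
  "ieq D S T \<longleftrightarrow> (\<exists>a b. a \<noteq> (0,0) \<and> b \<noteq> (0,0) \<and> sc D a S = sc D b T)"

definition nrm :: "int \<Rightarrow> int \<times> int \<Rightarrow> int" where
  "nrm D z = (fst z)^2 + D * (snd z)^2"

lemma qm_comm: "qm D z w = qm D w z"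
  by (simp add: qm_def algebra_simps)

lemma qm_assoc: "qm D (qm D x y) z = qm D x (qm D y z)"
  by (simp add: qm_def algebra_simps)

lemma qm_one[simp]: "qm D (1,0) z = z" "qm D z (1,0) = z"
  by (auto simp: qm_def)

lemma qm_zero[simp]: "qm D z (0,0) = (0,0)" "qm D (0,0) z = (0,0)"
  by (auto simp: qm_def)

lemma nrm_qm: "nrm D (qm D z w) = nrm D z * nrm D w"
  by (simp add: qm_def nrm_def power2_eq_square algebra_simps)

lemma nrm_zero_iff: "D > 0 \<Longrightarrow> nrm D z = 0 \<longleftrightarrow> z = (0,0)"
proof -
  assume D: "D > 0"
  obtain x y where z: "z = (x,y)" by (cases z)
  have h1: "x ^ 2 \<ge> 0" "D * y ^2 \<ge> 0" using D by auto
  have h2: "D * y ^2 = 0 \<longleftrightarrow> y = 0" using D by simp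
  have "x^2 + D * y^2 = 0 \<longleftrightarrow> x = 0 \<and> y = 0"
    using h1 h2 by (smt (verit) power_eq_0_iff zero_less_power2)
  then show ?thesis unfolding nrm_def z by simp
qed

lemma qm_nz: "D > 0 \<Longrightarrow> a \<noteq> (0,0) \<Longrightarrow> b \<noteq> (0,0) \<Longrightarrow> qm D a b \<noteq> (0,0)"
  using nrm_zero_iff nrm_qm by (metis mult_eq_0_iff)

lemma qm_diff: "qm D a z = qm D a w \<Longrightarrow> qm D a (fst z - fst w, snd z - snd w) = (0,0)"
  by (simp add: qm_def algebra_simps)

lemma qm_cancel: "D > 0 \<Longrightarrow> a \<noteq> (0,0) \<Longrightarrow> qm D a z = qm D a w \<Longrightarrow> z = w"
proof -
  assume D: "D > 0" and a: "a \<noteq> (0,0)" and e: "qm D a z = qm D a w"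
  have "(fst z - fst w, snd z - snd w) = (0,0)"
    using qm_diff[OF e] qm_nz[OF D a] by blast
  then show ?thesis by (cases z; cases w) auto
qed


lemma sc_sc: "sc D a (sc D b S) = sc D (qm D a b) S"
  unfolding sc_def image_comp by (simp add: o_def qm_assoc)

lemma ieq_sym: "ieq D S T \<Longrightarrow> ieq D T S"
  unfolding ieq_def by blast

lemma ieq_trans: assumes D: "D > 0" and "ieq D S T" "ieq D T U" shows "ieq D S U"
proof -
  obtain a b where ab: "a \<noteq> (0,0)" "b \<noteq> (0,0)" "sc D a S = sc D b T" using assms(2) ieq_def by blast
  obtain c d where cd: "c \<noteq> (0,0)" "d \<noteq> (0,0)" "sc D c T = sc D d U" using assms(3) ieq_def by blast
  have "sc D (qm D c a) S = sc D c (sc D a S)" by (rule sc_sc[symmetric])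
  also have "\<dots> = sc D c (sc D b T)" using ab(3) by (rule arg_cong)
  also have "\<dots> = sc D (qm D c b) T" by (rule sc_sc)
  also have "qm D c b = qm D b c" by (rule qm_comm)
  also have "sc D (qm D b c) T = sc D b (sc D c T)" by (rule sc_sc[symmetric])
  also have "\<dots> = sc D b (sc D d U)" using cd(3) by (rule arg_cong)
  also have "\<dots> = sc D (qm D b d) U" by (rule sc_sc)
  finally have e: "sc D (qm D c a) S = sc D (qm D b d) U" .
  have "qm D c a \<noteq> (0,0)" "qm D b d \<noteq> (0,0)" using qm_nz[OF D] ab cd by auto
  then show ?thesis unfolding ieq_def using e by blast
qed

inductive_set iprod :: "int \<Rightarrow> (int \<times> int) set \<Rightarrow> (int \<times> int) set \<Rightarrow> (int \<times> int) set"
  for D S T where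
  ip_mul: "x \<in> S \<Longrightarrow> y \<in> T \<Longrightarrow> qm D x y \<in> iprod D S T"
| ip_zero: "(0,0) \<in> iprod D S T"
| ip_add: "z \<in> iprod D S T \<Longrightarrow> w \<in> iprod D S T \<Longrightarrow> (fst z + fst w, snd z + snd w) \<in> iprod D S T"
| ip_neg: "z \<in> iprod D S T \<Longrightarrow> (- fst z, - snd z) \<in> iprod D S T"

lemma iprod_comm_sub: "iprod D S T \<subseteq> iprod D T S"
proof
  fix z assume "z \<in> iprod D S T" then show "z \<in> iprod D T S"
  proof induct
    case (ip_mul x y) then show ?case by (metis iprod.ip_mul qm_comm)
  qed (auto intro: iprod.intros)
qed

lemma iprod_comm: "iprod D S T = iprod D T S"
  using iprod_comm_sub by blast

lemma sc_iprod: "sc D a (iprod D S T) = iprod D (sc D a S) T"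
proof
  show "sc D a (iprod D S T) \<subseteq> iprod D (sc D a S) T"
  proof
    fix z assume "z \<in> sc D a (iprod D S T)"
    then obtain w where w: "w \<in> iprod D S T" "z = qm D a w" by (auto simp: sc_def)
    from w(1) have "qm D a w \<in> iprod D (sc D a S) T"
    proof induct
      case (ip_mul x y)
      have "qm D a x \<in> sc D a S" using ip_mul by (simp add: sc_def)
      then show ?case using ip_mul iprod.ip_mul[of "qm D a x" "sc D a S" y T D] by (simp add: qm_assoc)
    next
      case ip_zero then show ?case by (simp add: iprod.ip_zero)
    next
      case (ip_add z w)
      have "qm D a (fst z + fst w, snd z + snd w) = (fst (qm D a z) + fst (qm D a w), snd (qm D a z) + snd (qm D a w))"
        by (simp add: qm_def algebra_simps)
      then show ?case using ip_add iprod.ip_add by metis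
    next
      case (ip_neg z)
      have "qm D a (- fst z, - snd z) = (- fst (qm D a z), - snd (qm D a z))"
        by (simp add: qm_def algebra_simps)
      then show ?case using ip_neg iprod.ip_neg by metis
    qed
    then show "z \<in> iprod D (sc D a S) T" using w by simp
  qed
next
  show "iprod D (sc D a S) T \<subseteq> sc D a (iprod D S T)"
  proof
    fix z assume "z \<in> iprod D (sc D a S) T"
    then show "z \<in> sc D a (iprod D S T)"
    proof induct
      case (ip_mul x y)
      then obtain x' where x': "x' \<in> S" "x = qm D a x'" by (auto simp: sc_def)
      have "qm D x' y \<in> iprod D S T" using x' ip_mul by (simp add: iprod.ip_mul)
      moreover have "qm D x y = qm D a (qm D x' y)" using x' by (simp add: qm_assoc)
      ultimately show ?case unfolding sc_def by blast
    next
      case ip_zero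
      have "(0,0) = qm D a (0,0)" by simp
      then show ?case unfolding sc_def using iprod.ip_zero by blast
    next
      case (ip_add z w)
      then obtain z' w' where zw: "z' \<in> iprod D S T" "z = qm D a z'" "w' \<in> iprod D S T" "w = qm D a w'"
        by (auto simp: sc_def)
      have "(fst z + fst w, snd z + snd w) = qm D a (fst z' + fst w', snd z' + snd w')"
        using zw by (simp add: qm_def algebra_simps)
      then show ?case using zw iprod.ip_add unfolding sc_def by blast
    next
      case (ip_neg z)
      then obtain z' where zw: "z' \<in> iprod D S T" "z = qm D a z'" by (auto simp: sc_def)
      have "(- fst z, - snd z) = qm D a (- fst z', - snd z')"
        using zw by (simp add: qm_def algebra_simps)
      then show ?case using zw iprod.ip_neg unfolding sc_def by blast
    qed
  qed
qed

lemma sc_iprod2: "iprod D (sc D a S) (sc D b T) = sc D (qm D a b) (iprod D S T)"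
proof -
  have "iprod D (sc D a S) (sc D b T) = sc D a (iprod D S (sc D b T))" by (simp add: sc_iprod)
  also have "iprod D S (sc D b T) = sc D b (iprod D S T)"
    by (simp add: iprod_comm[of D S] sc_iprod)
  finally show ?thesis by (simp add: sc_sc)
qed

lemma ieq_iprod: assumes D: "D > 0" and "ieq D S S'" "ieq D T T'"
  shows "ieq D (iprod D S T) (iprod D S' T')"
proof -
  obtain a b where ab: "a \<noteq> (0,0)" "b \<noteq> (0,0)" "sc D a S = sc D b S'" using assms(2) ieq_def by blast
  obtain c d where cd: "c \<noteq> (0,0)" "d \<noteq> (0,0)" "sc D c T = sc D d T'" using assms(3) ieq_def by blast
  have "sc D (qm D a c) (iprod D S T) = iprod D (sc D a S) (sc D c T)" by (rule sc_iprod2[symmetric])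
  also have "\<dots> = iprod D (sc D b S') (sc D d T')" using ab(3) cd(3) by simp
  also have "\<dots> = sc D (qm D b d) (iprod D S' T')" by (rule sc_iprod2)
  finally have e: "sc D (qm D a c) (iprod D S T) = sc D (qm D b d) (iprod D S' T')" .
  have "qm D a c \<noteq> (0,0)" "qm D b d \<noteq> (0,0)" using qm_nz[OF D] ab cd by auto
  then show ?thesis unfolding ieq_def using e by blast
qed

lemma iprod_UNIV: "iprod D UNIV UNIV = UNIV"
proof -
  have "z \<in> iprod D UNIV UNIV" for z using iprod.ip_mul[of "(1,0)" UNIV z UNIV D] by simp
  then show ?thesis by blast
qed

definition idl :: "qform \<Rightarrow> (int \<times> int) set" where
  "idl f = {z. fst f dvd fst z + (fst (snd f) div 2) * snd z}"

definition lat :: "int \<times> int \<Rightarrow> int \<times> int \<Rightarrow> (int \<times> int) set" where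
  "lat e1 e2 = {(m * fst e1 + n * fst e2, m * snd e1 + n * snd e2) | m n. True}"

lemma idl_lat: "idl (a, 2*b, c) = lat (a,0) (-b,1)"
proof
  show "idl (a, 2*b, c) \<subseteq> lat (a,0) (-b,1)"
  proof
    fix z assume "z \<in> idl (a, 2*b, c)"
    then obtain k where k: "fst z + b * snd z = a * k" by (auto simp: idl_def)
    have "z = (k * a + snd z * (-b), k * 0 + snd z * 1)" using k by (cases z) (simp add: algebra_simps)
    then show "z \<in> lat (a,0) (-b,1)" unfolding lat_def by force
  qed
next
  show "lat (a,0) (-b,1) \<subseteq> idl (a, 2*b, c)"
    unfolding lat_def idl_def by (auto simp: algebra_simps)
qed

lemma sc_lat: "sc D x (lat e1 e2) = lat (qm D x e1) (qm D x e2)"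
proof
  show "sc D x (lat e1 e2) \<subseteq> lat (qm D x e1) (qm D x e2)"
  proof
    fix z assume "z \<in> sc D x (lat e1 e2)"
    then obtain m n where "z = qm D x (m * fst e1 + n * fst e2, m * snd e1 + n * snd e2)"
      unfolding sc_def lat_def by blast
    then have "z = (m * fst (qm D x e1) + n * fst (qm D x e2), m * snd (qm D x e1) + n * snd (qm D x e2))"
      by (simp add: qm_def algebra_simps)
    then show "z \<in> lat (qm D x e1) (qm D x e2)" unfolding lat_def by blast
  qed
next
  show "lat (qm D x e1) (qm D x e2) \<subseteq> sc D x (lat e1 e2)"
  proof
    fix z assume "z \<in> lat (qm D x e1) (qm D x e2)"
    then obtain m n where "z = (m * fst (qm D x e1) + n * fst (qm D x e2), m * snd (qm D x e1) + n * snd (qm D x e2))"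
      unfolding lat_def by blast
    then have "z = qm D x (m * fst e1 + n * fst e2, m * snd e1 + n * snd e2)"
      by (simp add: qm_def algebra_simps)
    then show "z \<in> sc D x (lat e1 e2)" unfolding sc_def lat_def by blast
  qed
qed

lemma lat_unimod:
  assumes "p * s - q * r = (1::int)"
  shows "lat (s*x1 + r*x2, s*y1 + r*y2) (q*x1 + p*x2, q*y1 + p*y2) = lat (x1,y1) (x2,y2)"
proof
  show "lat (s*x1 + r*x2, s*y1 + r*y2) (q*x1 + p*x2, q*y1 + p*y2) \<subseteq> lat (x1,y1) (x2,y2)"
  proof
    fix z assume "z \<in> lat (s*x1 + r*x2, s*y1 + r*y2) (q*x1 + p*x2, q*y1 + p*y2)"
    then obtain m n where "z = (m * (s*x1 + r*x2) + n * (q*x1 + p*x2), m * (s*y1 + r*y2) + n * (q*y1 + p*y2))"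
      unfolding lat_def by auto
    then have "z = ((m*s + n*q) * x1 + (m*r + n*p) * x2, (m*s + n*q) * y1 + (m*r + n*p) * y2)"
      by (simp add: algebra_simps)
    then show "z \<in> lat (x1,y1) (x2,y2)" unfolding lat_def by auto
  qed
next
  show "lat (x1,y1) (x2,y2) \<subseteq> lat (s*x1 + r*x2, s*y1 + r*y2) (q*x1 + p*x2, q*y1 + p*y2)"
  proof
    fix z assume "z \<in> lat (x1,y1) (x2,y2)"
    then obtain m n where z: "z = (m * x1 + n * x2, m * y1 + n * y2)"
      unfolding lat_def by auto
    have e1: "m * x1 + n * x2 = (m*p - n*q) * (s*x1 + r*x2) + (n*s - m*r) * (q*x1 + p*x2)"
    proof -
      have "(m*p - n*q) * (s*x1 + r*x2) + (n*s - m*r) * (q*x1 + p*x2) = (p*s - q*r) * (m * x1 + n * x2)"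
        by (simp add: algebra_simps)
      then show ?thesis using assms by simp
    qed
    have e2: "m * y1 + n * y2 = (m*p - n*q) * (s*y1 + r*y2) + (n*s - m*r) * (q*y1 + p*y2)"
    proof -
      have "(m*p - n*q) * (s*y1 + r*y2) + (n*s - m*r) * (q*y1 + p*y2) = (p*s - q*r) * (m * y1 + n * y2)"
        by (simp add: algebra_simps)
      then show ?thesis using assms by simp
    qed
    show "z \<in> lat (s*x1 + r*x2, s*y1 + r*y2) (q*x1 + p*x2, q*y1 + p*y2)"
      unfolding lat_def z using e1 e2 by auto
  qed
qed

lemma ppd_even:
  assumes "f \<in> ppd_forms (-4*D)"
  shows "\<exists>a b c. f = (a, 2*b, c) \<and> a > 0 \<and> a * c = b^2 + D"
proof -
  obtain a B c where f: "f = (a,B,c)" by (cases f)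
  have d: "B^2 - 4*a*c = -4*D" "a > 0" using assms f by (auto simp: ppd_forms_def qf_disc_def)
  then have "B^2 = 2*(2*(a*c - D))" by (simp add: algebra_simps)
  then have "even (B^2)" by (metis dvd_triv_left)
  then obtain b where b: "B = 2*b" by auto
  have "a * c = b^2 + D" using d b by (simp add: power2_eq_square algebra_simps)
  then show ?thesis using f b d by blast
qed

lemma E1:
  assumes D: "D > 0" and f: "f \<in> ppd_forms (-4*D)" and g: "g \<in> ppd_forms (-4*D)"
    and e: "sl2_equiv f g"
  shows "ieq D (idl f) (idl g)"
proof -
  obtain a b c where fa: "f = (a, 2*b, c)" "a > 0" "a * c = b^2 + D" using ppd_even[OF f] by blast
  obtain a' b' c' where ga: "g = (a', 2*b', c')" "a' > 0" "a' * c' = b'^2 + D" using ppd_even[OF g] by blast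
  obtain p q r s where pqrs: "p * s - q * r = 1" "\<And>x y. qf_eval g x y = qf_eval f (p * x + q * y) (r * x + s * y)"
    using e unfolding sl2_equiv_def by blast
  have ea: "a' = a*p^2 + 2*b*p*r + c*r^2" using pqrs(2)[of 1 0] fa ga by (simp add: qf_eval_def)
  have ec: "c' = a*q^2 + 2*b*q*s + c*s^2" using pqrs(2)[of 0 1] fa ga by (simp add: qf_eval_def)
  have "a' + 2*b' + c' = a*(p+q)^2 + 2*b*(p+q)*(r+s) + c*(r+s)^2"
    using pqrs(2)[of 1 1] fa ga by (simp add: qf_eval_def)
  then have eb: "b' = a*p*q + b*(p*s+q*r) + c*r*s" using ea ec by (simp add: power2_eq_square algebra_simps)
  define \<alpha> where "\<alpha> = (s*a' - r*b', r)"
  have i1: "s*a' - r*b' - b*r = a*p*(p*s-q*r) + b*r*(p*s - q*r) - b*r"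
    unfolding ea eb by (simp add: power2_eq_square algebra_simps)
  then have i1': "s*a' - r*b' = a*p + b*r" using pqrs(1) by simp
  have i2: "q*a' - p*b' = - b*p*(p*s-q*r) - c*r*(p*s-q*r)"
    unfolding ea eb by (simp add: power2_eq_square algebra_simps)
  then have i2': "q*a' - p*b' = - b*p - c*r" using pqrs(1) by simp
  have q1: "qm D \<alpha> (a,0) = (s*(a*a') + r*(-(a*b')), s*0 + r*a)"
    unfolding \<alpha>_def qm_def by (simp add: algebra_simps)
  have "-b*(s*a' - r*b') - D*r = -b*(a*p+b*r) - D*r" using i1' by simp
  also have "\<dots> = -a*b*p - r*(a*c)" using fa(3) by (simp add: power2_eq_square algebra_simps)
  also have "\<dots> = a*(- b*p - c*r)" by (simp add: algebra_simps)
  also have "\<dots> = a*(q*a' - p*b')" using i2' by simp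
  finally have j: "-b*(s*a' - r*b') - D*r = a*(q*a' - p*b')" .
  have q2a: "qm D \<alpha> (-b,1) = (-b*(s*a' - r*b') - D*r, (s*a' - r*b') - b*r)"
    unfolding \<alpha>_def qm_def by (simp add: algebra_simps)
  have q2b: "-b*(s*a' - r*b') - D*r = q*(a*a') + p*(-(a*b'))"
    unfolding j by (simp add: algebra_simps)
  have q2c: "(s*a' - r*b') - b*r = q*0 + p*a" using i1' by simp
  have q2: "qm D \<alpha> (-b,1) = (q*(a*a') + p*(-(a*b')), q*0 + p*a)"
    unfolding q2a q2b q2c ..
  have "sc D \<alpha> (idl f) = lat (qm D \<alpha> (a,0)) (qm D \<alpha> (-b,1))"
    unfolding fa(1) idl_lat sc_lat ..
  also have "\<dots> = lat (a*a', 0) (-(a*b'), a)"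
    unfolding q1 q2 by (rule lat_unimod[OF pqrs(1)])
  also have "\<dots> = sc D (a,0) (idl g)"
    unfolding ga(1) idl_lat sc_lat by (simp add: qm_def)
  finally have eq: "sc D \<alpha> (idl f) = sc D (a,0) (idl g)" .
  have "\<alpha> \<noteq> (0,0)"
  proof
    assume "\<alpha> = (0,0)"
    then have "r = 0" "s*a' = 0" unfolding \<alpha>_def by auto
    then show False using pqrs(1) ga(2) by auto
  qed
  moreover have "(a,0) \<noteq> ((0,0)::int\<times>int)" using fa(2) by simp
  ultimately show ?thesis unfolding ieq_def using eq by blast
qed

lemma bezout3: "gcd (a::int) (gcd b c) = 1 \<Longrightarrow> \<exists>x y z. x*a + y*b + z*c = 1"
proof -
  assume h: "gcd a (gcd b c) = 1"
  obtain u v where uv: "u * b + v * c = gcd b c" using bezout_int by blast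
  obtain s t where st: "s * a + t * gcd b c = gcd a (gcd b c)" using bezout_int by blast
  have "s*a + (t*u)*b + (t*v)*c = 1" using h st uv[symmetric] by (simp add: algebra_simps)
  then show ?thesis by blast
qed

lemma ip_smul_nat: "z \<in> iprod D S T \<Longrightarrow> (int n * fst z, int n * snd z) \<in> iprod D S T"
proof (induction n)
  case 0 then show ?case by (simp add: iprod.ip_zero)
next
  case (Suc n)
  from iprod.ip_add[OF Suc.IH[OF Suc.prems] Suc.prems] show ?case by (simp add: algebra_simps)
qed

lemma ip_smul: "z \<in> iprod D S T \<Longrightarrow> (k * fst z, k * snd z) \<in> iprod D S T"
proof (cases "k \<ge> 0")
  case True
  assume z: "z \<in> iprod D S T"
  then show ?thesis using ip_smul_nat[OF z, of "nat k"] True by simp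
next
  case False
  assume z: "z \<in> iprod D S T"
  from iprod.ip_neg[OF ip_smul_nat[OF z, of "nat (-k)"]] False show ?thesis by simp
qed

lemma ip_add2: "z \<in> iprod D S T \<Longrightarrow> w \<in> iprod D S T \<Longrightarrow> (z1,z2) = z \<Longrightarrow> (w1,w2) = w \<Longrightarrow> (z1 + w1, z2 + w2) \<in> iprod D S T"
  using iprod.ip_add by force

lemma prod_formula:
  assumes D: "D > 0" and f1: "f1 \<in> ppd_forms (-4*D)" and f2: "f2 \<in> ppd_forms (-4*D)"
    and ok: "dirichlet_ok (-4*D) f1 f2 B"
  shows "idl (dirichlet_comp (-4*D) f1 f2 B) = iprod D (idl f1) (idl f2)"
proof -
  obtain a1 b1 c1 where fa: "f1 = (a1, 2*b1, c1)" "a1 > 0" "a1 * c1 = b1^2 + D" using ppd_even[OF f1] by blast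
  obtain a2 b2 c2 where ga: "f2 = (a2, 2*b2, c2)" "a2 > 0" "a2 * c2 = b2^2 + D" using ppd_even[OF f2] by blast
  have okk: "gcd a1 (gcd a2 (b1 + b2)) = 1" "(2*a1) dvd (B - 2*b1)" "(2*a2) dvd (B - 2*b2)"
      "(4*a1*a2) dvd (B^2 + 4*D)"
  proof -
    have h: "gcd a1 (gcd a2 ((2 * b1 + 2 * b2) div 2)) = 1 \<and> [B = 2*b1] (mod 2 * a1) \<and> [B = 2*b2] (mod 2 * a2) \<and> [B^2 = -4*D] (mod 4 * a1 * a2)"
      using ok unfolding dirichlet_ok_def fa ga by (simp only: prod.case)
    have e: "(2 * b1 + 2 * b2) div 2 = b1 + b2" by simp
    have h2: "gcd a1 (gcd a2 (b1 + b2)) = 1" "[B = 2*b1] (mod 2 * a1)" "[B = 2*b2] (mod 2 * a2)" "[B^2 = -4*D] (mod 4 * a1 * a2)"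
      using h unfolding e by blast+
    then show "gcd a1 (gcd a2 (b1 + b2)) = 1" "(2*a1) dvd (B - 2*b1)" "(2*a2) dvd (B - 2*b2)"
      "(4*a1*a2) dvd (B^2 + 4*D)" by (simp_all add: cong_iff_dvd_diff)
  qed
  obtain kk where "B^2 + 4*D = 4*a1*a2*kk" using okk(4) by blast
  then have "B^2 = 2*(2*a1*a2*kk - 2*D)" by (simp add: algebra_simps)
  then have "even (B^2)" by (metis dvd_triv_left)
  then obtain b3 where b3: "B = 2*b3" by auto
  have "B - 2*b1 = 2 * (b3 - b1)" using b3 by simp
  then have "2 * a1 dvd 2 * (b3 - b1)" using okk(2) by simp
  then have d1: "a1 dvd (b3 - b1)" using dvd_mult_cancel_left[of 2 a1 "b3 - b1"] by presburger
  have "B - 2*b2 = 2 * (b3 - b2)" using b3 by simp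
  then have "2 * a2 dvd 2 * (b3 - b2)" using okk(3) by simp
  then have d2: "a2 dvd (b3 - b2)" using dvd_mult_cancel_left[of 2 a2 "b3 - b2"] by presburger
  have "4*a1*a2 dvd 4*(b3^2 + D)" using okk(4) b3 by (simp add: power2_eq_square algebra_simps)
  then have d3: "a1*a2 dvd (b3^2 + D)" using dvd_mult_cancel_left[of 4 "a1*a2" "b3^2 + D"] by (simp add: mult.assoc)
  then obtain c3 where c3: "b3^2 + D = a1*a2*c3" by blast
  have comp: "dirichlet_comp (-4*D) f1 f2 B = (a1*a2, 2*b3, ((2*b3)^2 - (-4*D)) div (4*a1*a2))"
    unfolding dirichlet_comp_def fa ga b3 by simp
  have idc: "idl (dirichlet_comp (-4*D) f1 f2 B) = {z. a1*a2 dvd fst z + b3 * snd z}"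
    unfolding comp idl_def by simp
  have id1: "idl f1 = {z. a1 dvd fst z + b3 * snd z}"
  proof -
    have "a1 dvd u + b1 * v \<longleftrightarrow> a1 dvd u + b3 * v" for u v
    proof -
      have e: "u + b3 * v = (u + b1 * v) + (b3 - b1) * v" by (simp add: algebra_simps)
      have "a1 dvd (b3 - b1) * v" using d1 by simp
      then show ?thesis unfolding e using dvd_add_left_iff by blast
    qed
    then show ?thesis unfolding idl_def fa by simp
  qed
  have id2: "idl f2 = {z. a2 dvd fst z + b3 * snd z}"
  proof -
    have "a2 dvd u + b2 * v \<longleftrightarrow> a2 dvd u + b3 * v" for u v
    proof -
      have e: "u + b3 * v = (u + b2 * v) + (b3 - b2) * v" by (simp add: algebra_simps)
      have "a2 dvd (b3 - b2) * v" using d2 by simp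
      then show ?thesis unfolding e using dvd_add_left_iff by blast
    qed
    then show ?thesis unfolding idl_def ga by simp
  qed
  show ?thesis
  proof
    show "iprod D (idl f1) (idl f2) \<subseteq> idl (dirichlet_comp (-4*D) f1 f2 B)"
    proof
      fix z assume "z \<in> iprod D (idl f1) (idl f2)"
      then show "z \<in> idl (dirichlet_comp (-4*D) f1 f2 B)"
      proof induct
        case (ip_mul x y)
        obtain x1 x2 where x: "x = (x1,x2)" by (cases x)
        obtain y1 y2 where y: "y = (y1,y2)" by (cases y)
        obtain k1 where k1: "x1 + b3 * x2 = a1 * k1" using ip_mul(1) id1 x by auto
        obtain k2 where k2: "y1 + b3 * y2 = a2 * k2" using ip_mul(2) id2 y by auto
        have x1: "x1 = a1 * k1 - b3 * x2" using k1 by simp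
        have y1: "y1 = a2 * k2 - b3 * y2" using k2 by simp
        have "fst (qm D x y) + b3 * snd (qm D x y) = (x1*y1 - D*x2*y2) + b3*(x1*y2 + y1*x2)"
          unfolding x y qm_def by simp
        also have "\<dots> = a1*a2*k1*k2 - (b3^2 + D)*x2*y2"
          unfolding x1 y1 by (simp add: power2_eq_square algebra_simps)
        also have "\<dots> = a1*a2*(k1*k2 - c3*x2*y2)" unfolding c3 by (simp add: algebra_simps)
        finally show ?case unfolding idc by simp
      next
        case ip_zero then show ?case unfolding idc by simp
      next
        case (ip_add z w)
        have e: "fst z + fst w + b3 * (snd z + snd w) = (fst z + b3 * snd z) + (fst w + b3 * snd w)"
          by (simp add: algebra_simps)
        have "a1*a2 dvd (fst z + b3 * snd z) + (fst w + b3 * snd w)"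
          using ip_add unfolding idc by (simp add: dvd_add)
        then show ?case unfolding idc e[symmetric] by simp
      next
        case (ip_neg z)
        have e: "- fst z + b3 * (- snd z) = - (fst z + b3 * snd z)" by simp
        have "a1*a2 dvd - (fst z + b3 * snd z)" using ip_neg unfolding idc by (simp only: mem_Collect_eq dvd_minus_iff)
        then show ?case unfolding idc e[symmetric] by simp
      qed
    qed
  next
    show "idl (dirichlet_comp (-4*D) f1 f2 B) \<subseteq> iprod D (idl f1) (idl f2)"
    proof
      let ?P = "iprod D (idl f1) (idl f2)"
      have A1: "(a1, 0) \<in> idl f1" unfolding id1 by simp
      have A2: "(a2, 0) \<in> idl f2" unfolding id2 by simp
      have T1: "(-b3, 1) \<in> idl f1" unfolding id1 by simp
      have T2: "(-b3, 1) \<in> idl f2" unfolding id2 by simp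
      have P0: "(a1*a2, 0) \<in> ?P" using iprod.ip_mul[OF A1 A2] by (simp add: qm_def)
      have P1: "(-a1*b3, a1) \<in> ?P" using iprod.ip_mul[OF A1 T2] by (simp add: qm_def)
      have P2: "(-a2*b3, a2) \<in> ?P" using iprod.ip_mul[OF T1 A2] by (simp add: qm_def ac_simps)
      have P3: "(b3^2 - D, -2*b3) \<in> ?P" using iprod.ip_mul[OF T1 T2] by (simp add: qm_def power2_eq_square)
      have P4: "(-c3 * (a1*a2), -c3 * 0) \<in> ?P" using ip_smul[OF P0, of "-c3"] by simp
      have P5: "(-(b3^2 - D), -(-2*b3)) \<in> ?P" using iprod.ip_neg[OF P3] by simp
      have P6: "(-2*b3*b3, 2*b3) \<in> ?P"
      proof -
        have "(-(b3^2 - D) + (-c3 * (a1*a2)), -(-2*b3) + (-c3*0)) \<in> ?P"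
          using ip_add2[OF P5 P4] by simp
        moreover have "-(b3^2 - D) + (-c3 * (a1*a2)) = -2*b3*b3"
          using c3 by (simp add: power2_eq_square algebra_simps)
        ultimately show ?thesis by simp
      qed
      obtain m1 where m1: "b3 - b1 = a1 * m1" using d1 by blast
      obtain m2 where m2: "b3 - b2 = a2 * m2" using d2 by blast
      obtain x y zz where xyz: "x*a1 + y*a2 + zz*(b1+b2) = 1" using bezout3[OF okk(1)] by blast
      have bz: "(x - zz*m1)*a1 + (y - zz*m2)*a2 + zz*(2*b3) = 1"
      proof -
        have e1: "2*b3 - a1*m1 - a2*m2 = b1 + b2" using m1 m2 by simp
        have "(x - zz*m1)*a1 + (y - zz*m2)*a2 + zz*(2*b3) = x*a1 + y*a2 + zz*(2*b3 - a1*m1 - a2*m2)"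
          by (simp add: algebra_simps)
        then show ?thesis unfolding e1 using xyz by simp
      qed
      have Q1: "((x - zz*m1) * (-a1*b3), (x - zz*m1) * a1) \<in> ?P" using ip_smul[OF P1, of "x - zz*m1"] by simp
      have Q2: "((y - zz*m2) * (-a2*b3), (y - zz*m2) * a2) \<in> ?P" using ip_smul[OF P2, of "y - zz*m2"] by simp
      have Q3: "(zz * (-2*b3*b3), zz * (2*b3)) \<in> ?P" using ip_smul[OF P6, of "zz"] by simp
      have "((x - zz*m1) * (-a1*b3) + (y - zz*m2) * (-a2*b3) + zz * (-2*b3*b3),
             (x - zz*m1) * a1 + (y - zz*m2) * a2 + zz * (2*b3)) \<in> ?P"
        using ip_add2[OF ip_add2[OF Q1 Q2 refl refl] Q3 refl refl] .
      moreover have "(x - zz*m1) * (-a1*b3) + (y - zz*m2) * (-a2*b3) + zz * (-2*b3*b3) = -b3"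
      proof -
        have "(x - zz*m1) * (-a1*b3) + (y - zz*m2) * (-a2*b3) + zz * (-2*b3*b3)
           = - b3 * ((x - zz*m1)*a1 + (y - zz*m2)*a2 + zz*(2*b3))" by (simp add: algebra_simps)
        then show ?thesis using bz by simp
      qed
      ultimately have TH: "(-b3, 1) \<in> ?P" using bz by simp
      fix z assume "z \<in> idl (dirichlet_comp (-4*D) f1 f2 B)"
      then obtain k where k: "fst z + b3 * snd z = a1*a2*k" unfolding idc by auto
      have R1: "(k * (a1*a2), k * 0) \<in> ?P" using ip_smul[OF P0, of "k"] by simp
      have R2: "(snd z * (-b3), snd z * 1) \<in> ?P" using ip_smul[OF TH, of "snd z"] by simp
      have "(k * (a1*a2) + snd z * (-b3), k*0 + snd z * 1) \<in> ?P" using ip_add2[OF R1 R2 refl refl] .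
      moreover have "(k * (a1*a2) + snd z * (-b3), k*0 + snd z * 1) = z"
        using k by (cases z) (simp add: algebra_simps)
      ultimately show "z \<in> ?P" by simp
    qed
  qed
qed

lemma principal_gen:
  assumes D: "D > 0" and h: "ieq D S UNIV"
  shows "\<exists>\<gamma>. S = sc D \<gamma> UNIV"
proof -
  obtain a b where ab: "a \<noteq> (0,0)" "b \<noteq> (0,0)" "sc D a S = sc D b UNIV" using h ieq_def by blast
  have "qm D b (1,0) \<in> sc D b UNIV" unfolding sc_def by blast
  then have "b \<in> sc D a S" using ab(3) by simp
  then obtain \<gamma> where g: "\<gamma> \<in> S" "b = qm D a \<gamma>" unfolding sc_def by blast
  have "S = sc D \<gamma> UNIV"
  proof
    show "S \<subseteq> sc D \<gamma> UNIV"
    proof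
      fix z assume z: "z \<in> S"
      then have "qm D a z \<in> sc D b UNIV" using ab(3) unfolding sc_def by blast
      then obtain w where "qm D a z = qm D b w" unfolding sc_def by blast
      then have "qm D a z = qm D a (qm D \<gamma> w)" using g by (simp add: qm_assoc)
      then have "z = qm D \<gamma> w" using qm_cancel[OF D ab(1)] by blast
      then show "z \<in> sc D \<gamma> UNIV" unfolding sc_def by blast
    qed
  next
    show "sc D \<gamma> UNIV \<subseteq> S"
    proof
      fix z assume "z \<in> sc D \<gamma> UNIV"
      then obtain w where w: "z = qm D \<gamma> w" unfolding sc_def by blast
      have "qm D b w \<in> sc D a S" using ab(3) unfolding sc_def by blast
      then obtain z' where z': "z' \<in> S" "qm D b w = qm D a z'" unfolding sc_def by blast
      then have "qm D a (qm D \<gamma> w) = qm D a z'" using g by (simp add: qm_assoc)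
      then have "qm D \<gamma> w = z'" using qm_cancel[OF D ab(1)] by blast
      then show "z \<in> S" using w z' by simp
    qed
  qed
  then show ?thesis by blast
qed

lemma dvd_nrm_of_dvd:
  assumes "S = sc D \<gamma> UNIV" "z \<in> S"
  shows "nrm D \<gamma> dvd nrm D z"
proof -
  obtain w where "z = qm D \<gamma> w" using assms unfolding sc_def by blast
  then show ?thesis by (simp add: nrm_qm)
qed

lemma rep_from_ideal:
  fixes M t :: int
  assumes D: "D > 0" and M: "M > 0" and Mt: "M dvd t^2 + D" and cop: "coprime M (2*t)"
    and h: "ieq D {z. M dvd fst z + t * snd z} UNIV"
  shows "\<exists>x y. x^2 + D * y^2 = M \<and> coprime x y \<and> M dvd x + t * y"
proof -
  let ?S = "{z. M dvd fst z + t * snd z}"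
  obtain \<gamma> where g: "?S = sc D \<gamma> UNIV" using principal_gen[OF D h] by blast
  obtain x y where xy: "\<gamma> = (x,y)" by (cases \<gamma>)
  have "\<gamma> \<in> ?S" unfolding g sc_def by (metis UNIV_I image_eqI qm_one(2))
  then have m1: "M dvd x + t * y" using xy by simp
  have nS: "M dvd nrm D z" if zS: "z \<in> ?S" for z
  proof -
    obtain k where k: "fst z + t * snd z = M * k" using zS by auto
    obtain l where l: "t^2 + D = M * l" using Mt by blast
    have "nrm D z = (M*k - t * snd z)^2 + D * (snd z)^2" unfolding nrm_def using k
      by (metis add_diff_cancel_right')
    also have "\<dots> = M * (M*k*k - 2*k*t*snd z) + (t^2 + D) * (snd z)^2"
      by (simp add: power2_eq_square algebra_simps)
    also have "\<dots> = M * (M*k*k - 2*k*t*snd z + l * (snd z)^2)" unfolding l by (simp add: algebra_simps)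
    finally show ?thesis by simp
  qed
  have "M dvd nrm D \<gamma>" using nS[OF \<open>\<gamma> \<in> ?S\<close>] .
  then obtain k where k: "nrm D \<gamma> = M * k" by blast
  have s1: "(M,0) \<in> ?S" by simp
  have s2: "(-t,1) \<in> ?S" by simp
  have s3: "(M-t,1) \<in> ?S" by simp
  have "nrm D \<gamma> dvd nrm D (M,0)" using dvd_nrm_of_dvd[OF g s1] .
  then have "M * k dvd M * M" unfolding k by (simp add: nrm_def power2_eq_square)
  then have k1: "k dvd M" using M by simp
  have "nrm D \<gamma> dvd nrm D (-t,1)" using dvd_nrm_of_dvd[OF g s2] .
  then have k2: "M * k dvd t^2 + D" unfolding k by (simp add: nrm_def)
  have "nrm D \<gamma> dvd nrm D (M-t,1)" using dvd_nrm_of_dvd[OF g s3] .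
  then have k3: "M * k dvd (M-t)^2 + D" unfolding k by (simp add: nrm_def)
  have e: "(M-t)^2 + D = (t^2 + D) + M * (M - 2*t)" by (simp add: power2_eq_square algebra_simps)
  have "M * k dvd M * (M - 2*t)" using k2 k3 unfolding e by (simp add: dvd_add_right_iff)
  then have k4: "k dvd M - 2*t" using M by simp
  have "2*t = M - (M - 2*t)" by simp
  then have "k dvd 2*t" using k1 k4 by (metis dvd_diff)
  then have "is_unit k" by (rule coprime_common_divisor[OF cop k1])
  then have "k = 1 \<or> k = -1" by auto
  moreover have "nrm D \<gamma> \<ge> 0" unfolding nrm_def using D by simp
  ultimately have "k = 1" using k M by auto
  then have n: "x^2 + D*y^2 = M" using k xy nrm_def by simp
  have "(-t,1) \<in> sc D \<gamma> UNIV" using s2 g by blast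
  then obtain w where w: "(-t,1) = qm D \<gamma> w" unfolding sc_def by blast
  then have "1 = x * snd w + fst w * y" unfolding xy qm_def by simp
  moreover have "gcd x y dvd x * snd w + fst w * y" by (simp add: dvd_add)
  ultimately have "gcd x y dvd 1" by simp
  then have "coprime x y" by (simp add: coprime_iff_gcd_eq_1)
  then show ?thesis using n m1 by blast
qed

lemma sl2_refl: "sl2_equiv f f"
  unfolding sl2_equiv_def by (rule exI[of _ 1], rule exI[of _ 0], rule exI[of _ 0], rule exI[of _ 1]) simp

lemma Z2_sq: "x \<otimes>\<^bsub>Z2_power n\<^esub> x = (\<lambda>i\<in>{..<n}. 0)"
proof -
  have "(x i + x i) mod 2 = 0" for i by presburger
  then show ?thesis unfolding Z2_power_def by (simp add: integer_mod_group_def)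
qed

lemma sq_eq:
  assumes h: "h \<in> iso G (Z2_power n)"
    and U: "U \<in> carrier G" "U \<otimes>\<^bsub>G\<^esub> U \<in> carrier G"
    and V: "V \<in> carrier G" "V \<otimes>\<^bsub>G\<^esub> V \<in> carrier G"
  shows "U \<otimes>\<^bsub>G\<^esub> U = V \<otimes>\<^bsub>G\<^esub> V"
proof -
  have hom: "h \<in> hom G (Z2_power n)" and inj: "inj_on h (carrier G)"
    using h unfolding iso_def bij_betw_def by auto
  have "h (U \<otimes>\<^bsub>G\<^esub> U) = h U \<otimes>\<^bsub>Z2_power n\<^esub> h U" using hom U(1) unfolding hom_def by blast
  also have "\<dots> = h V \<otimes>\<^bsub>Z2_power n\<^esub> h V" by (simp only: Z2_sq)
  also have "\<dots> = h (V \<otimes>\<^bsub>G\<^esub> V)" using hom V(1) unfolding hom_def by (simp add: Pi_iff)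
  finally show ?thesis using inj U(2) V(2) by (meson inj_on_def)
qed

definition cmQ :: "int \<Rightarrow> qform set \<Rightarrow> qform set \<Rightarrow> qform set \<Rightarrow> bool" where
  "cmQ dd U V W \<longleftrightarrow> W \<in> ppd_forms dd // sl2_rel dd \<and>
           (\<exists>f\<in>U. \<exists>g\<in>V. \<exists>B. dirichlet_ok dd f g B \<and> dirichlet_comp dd f g B \<in> W)"

lemma fcg_mult: "U \<otimes>\<^bsub>form_class_group dd\<^esub> V = (SOME W. cmQ dd U V W)"
  unfolding form_class_group_def cmQ_def by simp

lemma fcg_carrier: "carrier (form_class_group dd) = ppd_forms dd // sl2_rel dd"
  unfolding form_class_group_def by simp

lemma fcg_mult_Q: "cmQ dd U V W \<Longrightarrow> cmQ dd U V (U \<otimes>\<^bsub>form_class_group dd\<^esub> V)"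
  unfolding fcg_mult by (rule someI)

lemma mem_cls: "y \<in> sl2_rel dd `` {x} \<longleftrightarrow> x \<in> ppd_forms dd \<and> y \<in> ppd_forms dd \<and> sl2_equiv x y"
  unfolding sl2_rel_def by simp

lemma self_cls: "x \<in> ppd_forms dd \<Longrightarrow> x \<in> sl2_rel dd `` {x}"
  using mem_cls[of x dd x] sl2_refl[of x] by simp

lemma idl_principal: "idl (1, 0, D) = UNIV"
  unfolding idl_def by simp

lemma class_principal:
  assumes D: "D > 0" and iso: "\<exists>n::nat. form_class_group (- 4 * D) \<cong> Z2_power n"
    and g: "g \<in> ppd_forms (-4*D)" and F: "F \<in> ppd_forms (-4*D)"
    and ok: "dirichlet_ok (-4*D) g g B" and comp: "dirichlet_comp (-4*D) g g B = F"
  shows "ieq D (idl F) UNIV"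
proof -
  let ?dd = "-4*D"
  let ?G = "form_class_group ?dd"
  obtain n h where h: "h \<in> iso ?G (Z2_power n)" using iso unfolding is_iso_def by blast
  let ?e = "(1::int, 0::int, D)"
  have e: "?e \<in> ppd_forms ?dd" using D unfolding ppd_forms_def qf_disc_def by simp
  let ?P = "sl2_rel ?dd `` {?e}"
  have Pc: "?P \<in> carrier ?G" unfolding fcg_carrier using e by (rule quotientI)
  have ok0: "dirichlet_ok ?dd ?e ?e 0" unfolding dirichlet_ok_def by (simp add: cong_iff_dvd_diff)
  have comp0: "dirichlet_comp ?dd ?e ?e 0 = ?e" unfolding dirichlet_comp_def by simp
  have "cmQ ?dd ?P ?P ?P" unfolding cmQ_def
    using Pc fcg_carrier self_cls[OF e] ok0 comp0 by metis
  then have Q0: "cmQ ?dd ?P ?P (?P \<otimes>\<^bsub>?G\<^esub> ?P)" by (rule fcg_mult_Q)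
  let ?X = "sl2_rel ?dd `` {g}"
  have Xc: "?X \<in> carrier ?G" unfolding fcg_carrier using g by (rule quotientI)
  have "cmQ ?dd ?X ?X (sl2_rel ?dd `` {F})" unfolding cmQ_def
    using quotientI[OF F] self_cls[OF g] self_cls[OF F] ok comp by metis
  then have Q1: "cmQ ?dd ?X ?X (?X \<otimes>\<^bsub>?G\<^esub> ?X)" by (rule fcg_mult_Q)
  have sq: "?X \<otimes>\<^bsub>?G\<^esub> ?X = ?P \<otimes>\<^bsub>?G\<^esub> ?P"
    apply (rule sq_eq[OF h Xc _ Pc])
    using Q0 Q1 unfolding cmQ_def fcg_carrier by auto
  obtain e1 e2 B0 where E: "e1 \<in> ?P" "e2 \<in> ?P" "dirichlet_ok ?dd e1 e2 B0"
      "dirichlet_comp ?dd e1 e2 B0 \<in> ?P \<otimes>\<^bsub>?G\<^esub> ?P"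
    using Q0 unfolding cmQ_def by blast
  obtain f1 g1 B1 where X: "f1 \<in> ?X" "g1 \<in> ?X" "dirichlet_ok ?dd f1 g1 B1"
      "dirichlet_comp ?dd f1 g1 B1 \<in> ?P \<otimes>\<^bsub>?G\<^esub> ?P"
    using Q1 sq unfolding cmQ_def by auto
  have "?P \<otimes>\<^bsub>?G\<^esub> ?P \<in> ppd_forms ?dd // sl2_rel ?dd" using Q0 unfolding cmQ_def by blast
  then obtain w where w: "?P \<otimes>\<^bsub>?G\<^esub> ?P = sl2_rel ?dd `` {w}" "w \<in> ppd_forms ?dd"
    by (rule quotientE)
  define h0 where "h0 = dirichlet_comp ?dd e1 e2 B0"
  define h1 where "h1 = dirichlet_comp ?dd f1 g1 B1"
  have h0: "h0 \<in> ppd_forms ?dd" "sl2_equiv w h0" using E(4) unfolding h0_def w(1) mem_cls by auto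
  have h1: "h1 \<in> ppd_forms ?dd" "sl2_equiv w h1" using X(4) unfolding h1_def w(1) mem_cls by auto
  have e1: "e1 \<in> ppd_forms ?dd" "sl2_equiv ?e e1" using E(1) unfolding mem_cls by auto
  have e2: "e2 \<in> ppd_forms ?dd" "sl2_equiv ?e e2" using E(2) unfolding mem_cls by auto
  have f1: "f1 \<in> ppd_forms ?dd" "sl2_equiv g f1" using X(1) unfolding mem_cls by auto
  have g1: "g1 \<in> ppd_forms ?dd" "sl2_equiv g g1" using X(2) unfolding mem_cls by auto
  have "ieq D UNIV (idl e1)" using E1[OF D e e1(1) e1(2)] idl_principal by simp
  moreover have "ieq D UNIV (idl e2)" using E1[OF D e e2(1) e2(2)] idl_principal by simp
  ultimately have "ieq D (iprod D UNIV UNIV) (iprod D (idl e1) (idl e2))" by (rule ieq_iprod[OF D])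
  then have a1: "ieq D UNIV (idl h0)" unfolding iprod_UNIV h0_def prod_formula[OF D e1(1) e2(1) E(3)] .
  have a2: "ieq D (idl w) (idl h0)" by (rule E1[OF D w(2) h0])
  have a3: "ieq D (idl w) (idl h1)" by (rule E1[OF D w(2) h1])
  have a4: "ieq D UNIV (idl h1)" using ieq_trans[OF D a1 ieq_trans[OF D ieq_sym[OF a2] a3]] .
  have "ieq D (iprod D (idl g) (idl g)) (iprod D (idl f1) (idl g1))"
    by (rule ieq_iprod[OF D E1[OF D g f1] E1[OF D g g1]])
  then have "ieq D (idl F) (idl h1)"
    unfolding h1_def prod_formula[OF D f1(1) g1(1) X(3)] prod_formula[OF D g g ok, symmetric] comp .
  then show ?thesis using ieq_trans[OF D _ ieq_sym[OF a4]] by blast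
qed

lemma ppd_mk:
  fixes a t D :: int
  assumes D: "D > 0" and a: "a > 0" and dv: "a dvd t^2 + D" and cop: "coprime a (2*t)"
  shows "(a, 2*t, (t^2 + D) div a) \<in> ppd_forms (-4*D)"
proof -
  obtain l where l: "t^2 + D = a * l" using dv by blast
  have dl: "(t^2 + D) div a = l" using l a by simp
  have disc: "qf_disc (a, 2*t, l) = -4*D" unfolding qf_disc_def
    using l by (simp add: power2_eq_square algebra_simps)
  have "gcd a (gcd (2*t) l) dvd gcd a (2*t)"
    by (rule gcd_greatest) (auto intro: dvd_trans[OF gcd_dvd2 gcd_dvd1])
  moreover have g1: "gcd a (2*t) = 1" using cop by (simp add: coprime_iff_gcd_eq_1)
  ultimately have "gcd a (gcd (2*t) l) dvd 1" by simp
  moreover have "gcd a (gcd (2*t) l) \<ge> 0" by simp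
  ultimately have "gcd a (gcd (2*t) l) = 1" using zdvd1_eq by fastforce
  then show ?thesis unfolding ppd_forms_def dl using disc D a by simp
qed

lemma surj_rep:
  fixes c t :: int
  assumes D: "D > 0" and iso: "\<exists>n::nat. form_class_group (- 4 * D) \<cong> Z2_power n"
    and c: "c > 0" and dv: "c^2 dvd t^2 + D" and cop: "coprime c (2*t)"
  shows "\<exists>x y. x^2 + D * y^2 = c^2 \<and> coprime x y \<and> c^2 dvd x + t * y"
proof -
  define g where "g = (c, 2*t, (t^2 + D) div c)"
  define F where "F = (c*c, 2*t, (t^2 + D) div (c*c))"
  have dvc: "c dvd t^2 + D" using dv by (metis dvd_mult_left power2_eq_square)
  have g: "g \<in> ppd_forms (-4*D)" unfolding g_def by (rule ppd_mk[OF D c dvc cop])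
  have cop2: "coprime (c*c) (2*t)" using cop by simp
  have F: "F \<in> ppd_forms (-4*D)" unfolding F_def
    by (rule ppd_mk[OF D _ _ cop2]) (use c dv in \<open>auto simp: power2_eq_square\<close>)
  have gg: "gcd c (2*t) = 1" using cop by (simp add: coprime_iff_gcd_eq_1)
  have ok: "dirichlet_ok (-4*D) g g (2*t)" unfolding dirichlet_ok_def g_def
  proof (simp only: prod.case, intro conjI)
    show "gcd c (gcd c ((2*t + 2*t) div 2)) = 1" using gg by simp
    show "[2*t = 2*t] (mod 2 * c)" by simp
    show "[2*t = 2*t] (mod 2 * c)" by simp
    obtain l where l: "t^2 + D = c^2 * l" using dv by blast
    have "(2*t)^2 - (-4*D) = (4*c*c) * l" using l by (simp add: power2_eq_square algebra_simps)
    then show "[(2*t)^2 = -4*D] (mod 4 * c * c)" unfolding cong_iff_dvd_diff by simp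
  qed
  have comp: "dirichlet_comp (-4*D) g g (2*t) = F" unfolding dirichlet_comp_def g_def F_def
  proof (simp only: prod.case)
    have "((2*t)^2 - (-4*D)) = 4 * (t^2 + D)" by (simp add: power2_eq_square algebra_simps)
    moreover have "(4 * (t^2 + D)) div (4*(c*c)) = (t^2 + D) div (c*c)"
      by (rule div_mult_mult1) simp
    ultimately have "((2*t)^2 - (-4*D)) div (4*c*c) = (t^2 + D) div (c*c)"
      by (simp only: mult.assoc)
    then show "(c * c, 2 * t, ((2 * t)^2 - - 4 * D) div (4 * c * c)) = (c * c, 2 * t, (t^2 + D) div (c * c))"
      by simp
  qed
  have "ieq D (idl F) UNIV" by (rule class_principal[OF D iso g F ok comp])
  moreover have "idl F = {z. c^2 dvd fst z + t * snd z}" unfolding idl_def F_def by (simp add: power2_eq_square)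
  ultimately have "ieq D {z. c^2 dvd fst z + t * snd z} UNIV" by simp
  moreover have "coprime (c^2) (2*t)" using cop by simp
  ultimately show ?thesis using rep_from_ideal[OF D _ dv] c by simp
qed

definition RR :: "int \<Rightarrow> int \<Rightarrow> int set" where
  "RR D m = {t. 0 \<le> t \<and> t < m \<and> m dvd t^2 + D}"

lemma RR_finite: "finite (RR D m)"
  by (rule finite_subset[of _ "{0..<m}"]) (auto simp: RR_def)

lemma eq_of_dvd_range:
  fixes t t' m :: int
  assumes "0 \<le> t" "t < m" "0 \<le> t'" "t' < m" "m dvd t - t'"
  shows "t = t'"
proof -
  have "t mod m = t' mod m" using assms(5) by (simp add: mod_eq_dvd_iff)
  then show ?thesis using assms by simp
qed

lemma hensel:
  fixes p D :: int
  assumes p: "prime p" "odd p" and t0: "p dvd t0^2 + D" "\<not> p dvd t0"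
  shows "e \<ge> 1 \<Longrightarrow> \<exists>t. p^e dvd t^2 + D \<and> \<not> p dvd t"
proof (induction e rule: dec_induct)
  case base then show ?case using t0 by auto
next
  case (step e)
  then obtain t where t: "p^e dvd t^2 + D" "\<not> p dvd t" by blast
  obtain u where u: "t^2 + D = p^e * u" using t(1) by blast
  have "\<not> p dvd 2"
  proof
    assume "p dvd 2"
    then have "p \<le> 2" by (simp add: zdvd_imp_le)
    moreover have "p \<ge> 2" using p(1) by (simp add: prime_ge_2_int)
    ultimately have "p = 2" by simp
    then show False using p(2) by simp
  qed
  then have "\<not> p dvd 2*t" using p t(2) by (simp add: prime_dvd_mult_iff)
  then have "coprime p (2*t)" using p(1) by (rule prime_imp_coprime[rotated])
  then have "coprime (2*t) p" by (simp only: coprime_commute)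
  then obtain x y where xy: "x * (2*t) + y * p = 1" using bezout_int[of "2*t" p] by (auto simp: coprime_iff_gcd_eq_1)
  define j where "j = - u * x"
  define t' where "t' = t + j * p^e"
  have pp: "(p^e)^2 = p^(2*e)" by (metis power_mult mult.commute)
  have "t'^2 + D = (t^2 + D) + 2*t*j*p^e + j^2 * (p^e)^2" unfolding t'_def by (simp add: power2_eq_square algebra_simps)
  also have "\<dots> = p^e * (u + 2*t*j) + j^2 * p^(2*e)" unfolding u pp by (simp add: algebra_simps)
  also have "u + 2*t*j = u * y * p"
  proof -
    have "u + 2*t*j = u * (1 - x*(2*t))" unfolding j_def by (simp add: algebra_simps)
    also have "1 - x*(2*t) = y * p" using xy by simp
    finally show ?thesis by simp
  qed
  finally have e1: "t'^2 + D = p^e * (u * y * p) + j^2 * p^(2*e)" .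
  have e2: "p^e * (u * y * p) = p^(Suc e) * (u*y)" by (simp add: power_Suc algebra_simps)
  have "p^(Suc e) dvd p^(2*e)" using step(1) by (intro le_imp_power_dvd) simp
  then have "p^(Suc e) dvd t'^2 + D" unfolding e1 e2 by (simp add: dvd_add)
  moreover have "\<not> p dvd t'"
  proof
    assume "p dvd t'"
    moreover have "p dvd j * p^e" using step(1) by (simp add: dvd_power)
    ultimately have "p dvd t' - j * p^e" by (rule dvd_diff)
    then have "p dvd t" unfolding t'_def by simp
    then show False using t(2) by simp
  qed
  ultimately show ?case by blast
qed

lemma prime_odd_not_dvd2: "prime (p::int) \<Longrightarrow> odd p \<Longrightarrow> \<not> p dvd 2"
proof
  assume p: "prime p" "odd p" and "p dvd 2"
  then have "p \<le> 2" by (simp add: zdvd_imp_le)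
  moreover have "p \<ge> 2" using p(1) by (simp add: prime_ge_2_int)
  ultimately have "p = 2" by simp
  then show False using p(2) by simp
qed

lemma RR_prime_power:
  fixes p D x0 :: int
  assumes p: "prime p" "odd p" and pD: "\<not> p dvd D" and x0: "p dvd x0^2 + D" and e: "e \<ge> 1"
  shows "card (RR D (p^e)) = 2"
proof -
  have "\<not> p dvd x0"
  proof
    assume "p dvd x0"
    then have "p dvd x0^2" by (simp add: power2_eq_square)
    then have "p dvd (x0^2 + D) - x0^2" using x0 by (rule dvd_diff[rotated])
    then show False using pD by simp
  qed
  then obtain t where t: "p^e dvd t^2 + D" "\<not> p dvd t" using hensel[OF p x0 _ e] by blast
  define m where "m = p^e"
  have m: "m > 0" unfolding m_def using p(1) by (simp add: prime_gt_0_int)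
  have pm: "p dvd m" unfolding m_def using e by (simp add: dvd_power)
  define r where "r = t mod m"
  have r: "0 \<le> r" "r < m" unfolding r_def using m by auto
  have "[r = t] (mod m)" unfolding r_def by (simp add: cong_def)
  then have "[r^2 + D = t^2 + D] (mod m)" by (intro cong_add cong_pow) auto
  then have rd: "m dvd r^2 + D" using t(1) unfolding m_def using cong_dvd_iff by blast
  have np2: "\<not> p dvd 2" by (rule prime_odd_not_dvd2[OF p])
  have nr: "\<not> p dvd r"
  proof
    assume "p dvd r"
    moreover have "p dvd m * (t div m)" using pm by simp
    ultimately have "p dvd r + m * (t div m)" by (rule dvd_add)
    then show False using t(2) unfolding r_def by simp
  qed
  have np2r: "\<not> p dvd 2 * r" using np2 nr p(1) by (simp add: prime_dvd_mult_iff)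
  have r0: "r > 0" using r(1) nr by (cases "r = 0") auto
  have mr: "(m - r)^2 + D = m * (m - 2*r) + (r^2 + D)" by (simp add: power2_eq_square algebra_simps)
  have mrd: "m dvd (m-r)^2 + D" unfolding mr using rd by simp
  have neq: "r \<noteq> m - r"
  proof
    assume "r = m - r"
    then have "2 * r = m" by simp
    then show False using pm np2r by simp
  qed
  have "RR D m = {r, m - r}"
  proof
    show "{r, m - r} \<subseteq> RR D m" unfolding RR_def using r r0 rd mrd by auto
  next
    show "RR D m \<subseteq> {r, m - r}"
    proof
      fix t' assume "t' \<in> RR D m"
      then have t': "0 \<le> t'" "t' < m" "m dvd t'^2 + D" unfolding RR_def by auto
      have "(t' - r) * (t' + r) = (t'^2 + D) - (r^2 + D)" by (simp add: power2_eq_square algebra_simps)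
      moreover have "m dvd (t'^2 + D) - (r^2 + D)" using t'(3) rd by (rule dvd_diff)
      ultimately have prod: "m dvd (t' - r) * (t' + r)" by simp
      show "t' \<in> {r, m - r}"
      proof (cases "p dvd t' + r")
        case True
        have "\<not> p dvd t' - r"
        proof
          assume "p dvd t' - r"
          then have "p dvd (t' + r) - (t' - r)" using True by (rule dvd_diff[rotated])
          then show False using np2r by simp
        qed
        then have "coprime p (t' - r)" using p(1) by (rule prime_imp_coprime[rotated])
        then have "coprime m (t' - r)" unfolding m_def by simp
        then have "m dvd t' + r" using prod by (simp add: coprime_dvd_mult_right_iff)
        then have "m dvd t' - (m - r)"
        proof -
          assume "m dvd t' + r"
          then have "m dvd (t' + r) - m" by (simp add: dvd_diff)
          then show ?thesis by (simp add: algebra_simps)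
        qed
        then have "t' = m - r" using eq_of_dvd_range[of t' m "m - r"] t' r r0 by simp
        then show ?thesis by simp
      next
        case False
        then have "coprime p (t' + r)" using p(1) by (rule prime_imp_coprime[rotated])
        then have "coprime m (t' + r)" unfolding m_def by simp
        then have "m dvd t' - r" using prod by (simp add: coprime_dvd_mult_left_iff)
        then have "t' = r" using eq_of_dvd_range[of t' m r] t' r by simp
        then show ?thesis by simp
      qed
    qed
  qed
  then show ?thesis unfolding m_def[symmetric] using neq by simp
qed

lemma dvd_sq_mod: "(m::int) dvd t^2 + D \<Longrightarrow> m dvd (t mod m)^2 + D"
proof -
  assume h: "m dvd t^2 + D"
  have "[t mod m = t] (mod m)" by (simp add: cong_def)
  then have "[(t mod m)^2 + D = t^2 + D] (mod m)" by (intro cong_add cong_pow) auto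
  then show ?thesis using h cong_dvd_iff by blast
qed

lemma dvd_sq_cong: "[(r::int) = t] (mod m) \<Longrightarrow> m dvd t^2 + D \<Longrightarrow> m dvd r^2 + D"
proof -
  assume c: "[r = t] (mod m)" and h: "m dvd t^2 + D"
  from c have "[r^2 + D = t^2 + D] (mod m)" by (intro cong_add cong_pow) auto
  then show ?thesis using h cong_dvd_iff by blast
qed

lemma RR_crt:
  fixes m1 m2 :: int
  assumes m: "m1 > 0" "m2 > 0" and cop: "coprime m1 m2"
  shows "card (RR D (m1 * m2)) = card (RR D m1) * card (RR D m2)"
proof -
  let ?f = "\<lambda>t. (t mod m1, t mod m2)"
  have "bij_betw ?f (RR D (m1 * m2)) (RR D m1 \<times> RR D m2)"
  proof (rule bij_betw_imageI)
    show "inj_on ?f (RR D (m1 * m2))"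
    proof (rule inj_onI)
      fix t t' assume t: "t \<in> RR D (m1 * m2)" and t': "t' \<in> RR D (m1 * m2)" and e: "?f t = ?f t'"
      have "m1 dvd t - t'" using e by (simp add: mod_eq_dvd_iff)
      moreover have "m2 dvd t - t'" using e by (simp add: mod_eq_dvd_iff)
      ultimately have "m1 * m2 dvd t - t'" using cop by (rule divides_mult)
      then show "t = t'" using eq_of_dvd_range[of t "m1*m2" t'] t t' unfolding RR_def by simp
    qed
  next
    show "?f ` RR D (m1 * m2) = RR D m1 \<times> RR D m2"
    proof
      show "?f ` RR D (m1 * m2) \<subseteq> RR D m1 \<times> RR D m2"
      proof
        fix z assume "z \<in> ?f ` RR D (m1 * m2)"
        then obtain t where t: "t \<in> RR D (m1*m2)" "z = ?f t" by blast
        have "m1 dvd t^2 + D" "m2 dvd t^2 + D" using t(1) unfolding RR_def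
          by (auto intro: dvd_trans[of _ "m1*m2"])
        then show "z \<in> RR D m1 \<times> RR D m2" using t(2) m unfolding RR_def by (auto intro: dvd_sq_mod)
      qed
    next
      show "RR D m1 \<times> RR D m2 \<subseteq> ?f ` RR D (m1 * m2)"
      proof
        fix z assume "z \<in> RR D m1 \<times> RR D m2"
        then obtain r1 r2 where z: "z = (r1, r2)" "r1 \<in> RR D m1" "r2 \<in> RR D m2" by blast
        obtain u v where uv: "u * m1 + v * m2 = 1" using bezout_int[of m1 m2] cop by (auto simp: coprime_iff_gcd_eq_1)
        define x where "x = r1 * v * m2 + r2 * u * m1"
        define t where "t = x mod (m1 * m2)"
        have c1: "[t = r1] (mod m1)"
        proof -
          have "[t = x] (mod m1)" unfolding t_def by (simp add: cong_def mod_mod_cancel)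
          moreover have "x = r1 + m1 * (r2 * u - r1 * u)"
          proof -
            have "v*m2 = 1 - u*m1" using uv by simp
            have "x = r1 * (v*m2) + r2 * u * m1" unfolding x_def by (simp add: algebra_simps)
            also have "\<dots> = r1 * (1 - u*m1) + r2 * u * m1" using \<open>v*m2 = 1 - u*m1\<close> by simp
            finally show ?thesis by (simp add: algebra_simps)
          qed
          then have "[r1 = x] (mod m1)" unfolding cong_iff_lin by blast
          then have "[x = r1] (mod m1)" by (rule cong_sym)
          ultimately show ?thesis by (rule cong_trans)
        qed
        have c2: "[t = r2] (mod m2)"
        proof -
          have "[t = x] (mod m2)" unfolding t_def by (simp add: cong_def mod_mod_cancel)
          moreover have "x = r2 + m2 * (r1 * v - r2 * v)"
          proof -
            have "u*m1 = 1 - v*m2" using uv by simp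
            have "x = r1 * v * m2 + r2 * (u * m1)" unfolding x_def by (simp add: algebra_simps)
            also have "\<dots> = r1 * v * m2 + r2 * (1 - v*m2)" using \<open>u*m1 = 1 - v*m2\<close> by simp
            finally show ?thesis by (simp add: algebra_simps)
          qed
          then have "[r2 = x] (mod m2)" unfolding cong_iff_lin by blast
          then have "[x = r2] (mod m2)" by (rule cong_sym)
          ultimately show ?thesis by (rule cong_trans)
        qed
        have r: "0 \<le> r1" "r1 < m1" "m1 dvd r1^2 + D" "0 \<le> r2" "r2 < m2" "m2 dvd r2^2 + D"
          using z unfolding RR_def by auto
        have "m1 dvd t^2 + D" by (rule dvd_sq_cong[OF c1 r(3)])
        moreover have "m2 dvd t^2 + D" by (rule dvd_sq_cong[OF c2 r(6)])
        ultimately have "m1 * m2 dvd t^2 + D" using cop by (rule divides_mult)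
        moreover have "0 \<le> t" "t < m1 * m2" unfolding t_def using m by auto
        ultimately have tR: "t \<in> RR D (m1 * m2)" unfolding RR_def by simp
        have "t mod m1 = r1" using c1 r by (simp add: cong_def)
        moreover have "t mod m2 = r2" using c2 r by (simp add: cong_def)
        ultimately have "?f t = z" using z by simp
        then show "z \<in> ?f ` RR D (m1 * m2)" using tR by blast
      qed
    qed
  qed
  then have "card (RR D (m1 * m2)) = card (RR D m1 \<times> RR D m2)" by (rule bij_betw_same_card)
  then show ?thesis by (simp add: card_cartesian_product)
qed

lemma count_roots:
  fixes c :: nat
  assumes "c > 0"
    and "\<forall>p\<in>prime_factors c. odd p \<and> \<not> int p dvd D \<and> (\<exists>x. int p dvd x^2 + D)"
  shows "card (RR D (int c ^ 2)) = 2 ^ card (prime_factors c)"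
  using assms
proof (induction c rule: less_induct)
  case (less c)
  show ?case
  proof (cases "c = 1")
    case True
    have "RR D 1 = {0}" unfolding RR_def by auto
    then show ?thesis using True by simp
  next
    case False
    obtain p where p: "prime p" "p dvd c" using prime_factor_nat[OF False] by blast
    have pc: "p \<in> prime_factors c" using p less.prems(1) by (simp add: in_prime_factors_iff)
    obtain y where y: "c = p ^ multiplicity p c * y" "\<not> p dvd y"
      using multiplicity_decompose'[of c p] less.prems(1) p(1) by (metis not_prime_unit neq0_conv)
    define k where "k = multiplicity p c"
    have k: "k \<ge> 1"
    proof (rule ccontr)
      assume "\<not> k \<ge> 1" then have "k = 0" by simp
      then have "c = y" using y unfolding k_def by simp
      then show False using p y by simp
    qed
    have y0: "y > 0" using y less.prems(1) by (cases "y = 0") auto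
    have pk: "p ^ k \<ge> 2"
    proof -
      have "p > 0" using p(1) prime_gt_0_nat by blast
      then have "p ^ k \<ge> p ^ 1" using k by (intro power_increasing) auto
      moreover have "p \<ge> 2" using p(1) prime_ge_2_nat by blast
      ultimately show ?thesis by simp
    qed
    have cy: "c = p^k * y" using y unfolding k_def by simp
    have "p^k * y \<ge> 2 * y" by (rule mult_le_mono1[OF pk])
    then have yc: "y < c" using cy y0 by linarith
    have pfc: "prime_factors c = insert p (prime_factors y)"
    proof -
      have "prime_factors c = prime_factors (p^k) \<union> prime_factors y"
        using y y0 p(1) unfolding k_def[symmetric] by (simp add: prime_factors_product)
      moreover have "prime_factors (p^k) = {p}" using p(1) k by (simp add: prime_factorization_prime_power)
      ultimately show ?thesis by simp
    qed
    have pny: "p \<notin> prime_factors y" using y(2) by (simp add: in_prime_factors_iff)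
    have cardc: "card (prime_factors c) = Suc (card (prime_factors y))" using pfc pny by simp
    have IH: "card (RR D (int y ^ 2)) = 2 ^ card (prime_factors y)"
      using less.IH[OF yc y0] less.prems(2) pfc by blast
    have pgood: "odd p" "\<not> int p dvd D" "\<exists>x. int p dvd x^2 + D" using less.prems(2) pc by auto
    obtain x0 where x0: "int p dvd x0^2 + D" using pgood(3) by blast
    have ip: "prime (int p)" "odd (int p)" using p(1) pgood(1) by auto
    have card_pp: "card (RR D (int p ^ (2*k))) = 2"
      by (rule RR_prime_power[OF ip pgood(2) x0]) (use k in simp)
    have "coprime p y" using p(1) y(2) by (rule prime_imp_coprime)
    then have "coprime (int p) (int y)" by simp
    then have cop: "coprime (int p ^ (2*k)) (int y ^ 2)" by simp
    have "int c ^ 2 = int p ^ (2*k) * int y ^ 2"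
      using y unfolding k_def[symmetric] by (simp add: power_mult_distrib power_mult[symmetric] mult.commute)
    then have "card (RR D (int c ^ 2)) = card (RR D (int p ^ (2*k))) * card (RR D (int y ^ 2))"
      using RR_crt[OF _ _ cop] p(1) y0 by (simp add: prime_gt_0_nat)
    then show ?thesis using card_pp IH cardc by simp
  qed
qed

lemma cop_y_c:
  fixes x y C D :: int
  assumes e: "x^2 + D*y^2 = C^2" and cop: "coprime x y"
  shows "coprime y C"
proof (rule coprimeI)
  fix d assume d: "d dvd y" "d dvd C"
  have "d^2 dvd C^2" using d(2) by simp
  moreover have "d^2 dvd D*y^2" using d(1) by simp
  ultimately have "d^2 dvd C^2 - D*y^2" by (rule dvd_diff)
  moreover have "C^2 - D*y^2 = x^2" using e by simp
  ultimately have "d^2 dvd x^2" by simp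
  then have "d dvd x" by simp
  then show "is_unit d" using coprime_common_divisor[OF cop _ d(1)] by blast
qed

lemma cop_c_t:
  fixes C t D :: int
  assumes sf: "squarefree D" and dv: "C^2 dvd t^2 + D"
  shows "coprime C t"
proof (rule coprimeI)
  fix d assume d: "d dvd C" "d dvd t"
  have "d^2 dvd t^2 + D" using d(1) dv by (meson dvd_trans pow_divides_pow_iff zero_less_numeral)
  moreover have "d^2 dvd t^2" using d(2) by simp
  ultimately have "d^2 dvd (t^2 + D) - t^2" by (rule dvd_diff)
  then have "d^2 dvd D" by simp
  then show "is_unit d" using sf unfolding squarefree_def by blast
qed

lemma S_good:
  assumes "p \<in> S_set D"
  shows "odd p \<and> \<not> int p dvd D \<and> (\<exists>x. int p dvd x^2 + D)"
proof -
  have h: "prime p" "odd p" "Legendre (-D) (int p) = 1" using assms unfolding S_set_def by auto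
  then have "\<not> [-D = 0] (mod int p)" "QuadRes (int p) (-D)" unfolding Legendre_def
    by (auto split: if_splits)
  then have "\<not> int p dvd D" "\<exists>y. [y^2 = -D] (mod int p)" unfolding QuadRes_def
    by (auto simp: cong_0_iff)
  moreover then have "\<exists>x. int p dvd x^2 + D" by (auto simp: cong_iff_dvd_diff)
  ultimately show ?thesis using h by blast
qed

definition rho :: "int \<Rightarrow> int \<times> int \<Rightarrow> int" where
  "rho m z = (THE t. 0 \<le> t \<and> t < m \<and> m dvd fst z + t * snd z)"

lemma rho_ex1:
  fixes m x y :: int
  assumes m: "m > 0" and cop: "coprime y m"
  shows "\<exists>!t. 0 \<le> t \<and> t < m \<and> m dvd x + t * y"
proof -
  obtain u v where uv: "u * y + v * m = 1" using bezout_int[of y m] cop by (auto simp: coprime_iff_gcd_eq_1)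
  define t where "t = (- x * u) mod m"
  have t: "0 \<le> t" "t < m" unfolding t_def using m by auto
  have "[t = - x * u] (mod m)" unfolding t_def by (simp add: cong_def)
  then have "[x + t * y = x + (- x * u) * y] (mod m)" by (intro cong_add cong_mult) auto
  moreover have "x + (- x * u) * y = m * (x * v)"
  proof -
    have "x + (- x * u) * y = x * (1 - u * y)" by (simp add: algebra_simps)
    also have "1 - u * y = v * m" using uv by simp
    finally show ?thesis by simp
  qed
  ultimately have "m dvd x + t * y" by (simp add: cong_dvd_iff)
  moreover have "t' = t" if "0 \<le> t'" "t' < m" "m dvd x + t' * y" for t'
  proof -
    have "m dvd (x + t' * y) - (x + t * y)" using that(3) \<open>m dvd x + t * y\<close> by (rule dvd_diff)
    then have "m dvd (t' - t) * y" by (simp add: algebra_simps)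
    then have "m dvd t' - t" using cop by (simp add: coprime_commute coprime_dvd_mult_left_iff)
    then show ?thesis using eq_of_dvd_range[of t' m t] that t by simp
  qed
  ultimately show ?thesis using t by blast
qed

lemma rho_prop:
  fixes m x y :: int
  assumes m: "m > 0" and cop: "coprime y m"
  shows "0 \<le> rho m (x,y) \<and> rho m (x,y) < m \<and> m dvd x + rho m (x,y) * y"
  unfolding rho_def using theI'[OF rho_ex1[OF m cop, of x]] by simp

lemma rho_eq:
  fixes m x y t :: int
  assumes m: "m > 0" and cop: "coprime y m" and t: "0 \<le> t" "t < m" "m dvd x + t * y"
  shows "rho m (x,y) = t"
  unfolding rho_def using the1_equality[OF rho_ex1[OF m cop, of x]] t by simp

lemma card_Sol2:
  fixes c D :: int
  assumes D: "D > 1" and sf: "squarefree D" and iso: "\<exists>n::nat. form_class_group (- 4 * D) \<cong> Z2_power n"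
    and c: "c > 1" and oc: "odd c"
  shows "card {(x,y). x^2 + D*y^2 = c^2 \<and> coprime x y \<and> y > 0} = card (RR D (c^2))"
proof -
  let ?S = "{(x,y). x^2 + D*y^2 = c^2 \<and> coprime x y \<and> y > 0}"
  let ?m = "c^2"
  have m: "?m > 0" using c by simp
  have copm: "coprime y ?m" if "(x,y) \<in> ?S" for x y
    using cop_y_c[of x D y c] that by simp
  have "bij_betw (rho ?m) ?S (RR D ?m)"
  proof (rule bij_betw_imageI)
    show "inj_on (rho ?m) ?S"
    proof (rule inj_onI)
      fix z z' assume z: "z \<in> ?S" and z': "z' \<in> ?S" and e: "rho ?m z = rho ?m z'"
      obtain x y where xy: "z = (x,y)" by (cases z)
      obtain x' y' where xy': "z' = (x',y')" by (cases z')
      have S1: "x^2 + D*y^2 = ?m" "coprime x y" "y > 0" using z xy by auto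
      have S2: "x'^2 + D*y'^2 = ?m" "coprime x' y'" "y' > 0" using z' xy' by auto
      define t where "t = rho ?m (x,y)"
      have t1: "?m dvd x + t * y" using rho_prop[OF m copm[of x y]] z xy t_def by simp
      have t2: "?m dvd x' + t * y'" using rho_prop[OF m copm[of x' y'], of x'] z' xy' t_def e xy by simp
      define d where "d = x*y' - x'*y"
      have "d = (x + t*y) * y' - (x' + t*y') * y" unfolding d_def by (simp add: algebra_simps)
      then have md: "?m dvd d" using t1 t2 by (simp add: dvd_diff)
      have iden: "(x*x' + D*y*y')^2 + D*d^2 = (x^2 + D*y^2) * (x'^2 + D*y'^2)"
        unfolding d_def by (simp add: power2_eq_square algebra_simps)
      then have sq: "(x*x' + D*y*y')^2 + D*d^2 = ?m * ?m" using S1 S2 by simp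
      have "(x*x' + D*y*y')^2 \<ge> 0" by simp
      then have a1: "D * d^2 \<le> ?m * ?m" using sq by linarith
      have d0: "d = 0"
      proof (rule ccontr)
        assume dn: "d \<noteq> 0"
        then have "d^2 > 0" by simp
        then have a2: "d^2 < D * d^2" using D by simp
        obtain k where k: "d = ?m * k" using md by blast
        then have "k \<noteq> 0" using dn by auto
        then have "k^2 > 0" by simp
        then have "k^2 \<ge> 1" by linarith
        then have "(?m * ?m) * 1 \<le> (?m * ?m) * k^2" using m by (intro mult_left_mono) auto
        moreover have "d^2 = (?m * ?m) * k^2" unfolding k by (simp add: power_mult_distrib power2_eq_square)
        ultimately have "d^2 \<ge> ?m * ?m" by simp
        then show False using a1 a2 by linarith
      qed
      then have e2: "x*y' = x'*y" unfolding d_def by simp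
      have "y dvd x' * y" by simp
      then have "y dvd x * y'" using e2 by simp
      moreover have "coprime y x" using S1(2) by (simp add: coprime_commute)
      ultimately have "y dvd y'" using coprime_dvd_mult_right_iff by blast
      have "y' dvd x * y'" by simp
      then have "y' dvd x' * y" using e2 by simp
      moreover have "coprime y' x'" using S2(2) by (simp add: coprime_commute)
      ultimately have "y' dvd y" using coprime_dvd_mult_right_iff by blast
      have "y = y'" using \<open>y dvd y'\<close> \<open>y' dvd y\<close> S1(3) S2(3) by (simp add: zdvd_antisym_nonneg)
      then have "x = x'" using e2 S1(3) by simp
      then show "z = z'" using xy xy' \<open>y = y'\<close> by simp
    qed
  next
    show "rho ?m ` ?S = RR D ?m"
    proof
      show "rho ?m ` ?S \<subseteq> RR D ?m"
      proof
        fix t assume "t \<in> rho ?m ` ?S"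
        then obtain x y where xy: "(x,y) \<in> ?S" "t = rho ?m (x,y)" by blast
        have S1: "x^2 + D*y^2 = ?m" "coprime x y" "y > 0" using xy by auto
        have tp: "0 \<le> t" "t < ?m" "?m dvd x + t * y" using rho_prop[OF m copm[OF xy(1)]] xy(2) by auto
        have "y^2 * (t^2 + D) = (t*y - x) * (t*y + x) + (x^2 + D*y^2)"
          by (simp add: power2_eq_square algebra_simps)
        moreover have "?m dvd (t*y - x) * (t*y + x)" using tp(3) by (simp add: add.commute)
        ultimately have "?m dvd y^2 * (t^2 + D)" using S1(1) by simp
        moreover have "coprime ?m (y^2)" using copm[OF xy(1)] by (simp add: coprime_commute)
        ultimately have "?m dvd t^2 + D" by (simp add: coprime_dvd_mult_right_iff)
        then show "t \<in> RR D ?m" unfolding RR_def using tp by simp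
      qed
    next
      show "RR D ?m \<subseteq> rho ?m ` ?S"
      proof
        fix t assume tR: "t \<in> RR D ?m"
        then have tp: "0 \<le> t" "t < ?m" "?m dvd t^2 + D" unfolding RR_def by auto
        have "coprime c t" by (rule cop_c_t[OF sf tp(3)])
        moreover have "coprime c 2" using oc by (simp add: coprime_commute odd_imp_coprime_nat)
        ultimately have "coprime c (2*t)" by simp
        then obtain x y where xy: "x^2 + D*y^2 = ?m" "coprime x y" "?m dvd x + t * y"
          using surj_rep[of D c t] D iso c tp(3) by auto
        have y0: "y \<noteq> 0"
        proof
          assume "y = 0"
          then have "is_unit x" "x^2 = c^2" using xy by auto
          then have "c^2 = 1" using abs_square_eq_1[of x] by auto
          moreover have "c^2 > 1" using c by (simp add: one_less_power)
          ultimately show False by simp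
        qed
        show "t \<in> rho ?m ` ?S"
        proof (cases "y > 0")
          case True
          then have inS: "(x,y) \<in> ?S" using xy by simp
          have "rho ?m (x,y) = t" using rho_eq[OF m copm[OF inS] tp(1,2) xy(3)] .
          then show ?thesis using image_eqI[of t "rho ?m" "(x,y)" ?S] inS by simp
        next
          case False
          then have "-y > 0" using y0 by simp
          then have inS: "(-x,-y) \<in> ?S" using xy by simp
          have "?m dvd -(x + t * y)" using xy(3) by (simp only: dvd_minus_iff)
          moreover have "-(x + t * y) = (-x) + t * (-y)" by simp
          ultimately have "?m dvd (-x) + t * (-y)" by metis
          then have "rho ?m (-x,-y) = t" using rho_eq[OF m copm[OF inS] tp(1,2)] by simp
          then show ?thesis using image_eqI[of t "rho ?m" "(-x,-y)" ?S] inS by simp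
        qed
      qed
    qed
  qed
  then show ?thesis by (rule bij_betw_same_card)
qed

lemma gcd3_iff:
  fixes a b c :: nat and D :: int
  assumes e: "int a ^ 2 + D * int b ^ 2 = int c ^ 2"
  shows "gcd a (gcd b c) = 1 \<longleftrightarrow> coprime a b"
proof
  assume h: "gcd a (gcd b c) = 1"
  show "coprime a b"
  proof (rule coprimeI)
    fix d assume d: "d dvd a" "d dvd b"
    have "int d ^ 2 dvd int a ^ 2 + D * int b ^ 2" using d by (simp add: dvd_add)
    then have "int d ^ 2 dvd int c ^ 2" using e by simp
    then have "d dvd c" by (metis int_dvd_int_iff of_nat_power pow_divides_pow_iff zero_less_numeral)
    then have "d dvd gcd a (gcd b c)" using d by simp
    then show "is_unit d" using h by simp
  qed
next
  assume "coprime a b"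
  then have "gcd a b = 1" by simp
  moreover have "gcd a (gcd b c) dvd gcd a b" by (rule gcd_greatest) (auto intro: dvd_trans[OF gcd_dvd2 gcd_dvd1])
  ultimately show "gcd a (gcd b c) = 1" by simp
qed

lemma card_Sol:
  fixes c :: nat and D :: int
  assumes D: "D > 1" and sf: "squarefree D" and iso: "\<exists>n::nat. form_class_group (- 4 * D) \<cong> Z2_power n"
    and c: "c > 1" and oc: "odd c"
  shows "card (RR D (int c ^ 2)) = 2 * card {(a, b). normalized_sol D a b c}"
proof -
  let ?Sol = "{(a, b). normalized_sol D a b c}"
  let ?S2 = "{(x,y). x^2 + D*y^2 = (int c)^2 \<and> coprime x y \<and> y > 0}"
  have c2: "card ?S2 = card (RR D ((int c)^2))"
    by (rule card_Sol2[OF D sf iso]) (use c oc in auto)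
  define g where "g = (\<lambda>((a::nat,b::nat), s::bool). (if s then int a else - int a, int b))"
  have "bij_betw g (?Sol \<times> UNIV) ?S2"
  proof (rule bij_betw_imageI)
    show "inj_on g (?Sol \<times> UNIV)"
    proof (rule inj_onI)
      fix u v assume u: "u \<in> ?Sol \<times> UNIV" and v: "v \<in> ?Sol \<times> UNIV" and e: "g u = g v"
      obtain a b s where us: "u = ((a,b),s)" by (metis prod.collapse)
      obtain a' b' s' where vs: "v = ((a',b'),s')" by (metis prod.collapse)
      have "a > 0" "a' > 0" using u v us vs unfolding normalized_sol_def by auto
      then show "u = v" using e us vs unfolding g_def by (auto split: if_splits)
    qed
  next
    show "g ` (?Sol \<times> UNIV) = ?S2"
    proof
      show "g ` (?Sol \<times> UNIV) \<subseteq> ?S2"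
      proof
        fix z assume "z \<in> g ` (?Sol \<times> UNIV)"
        then obtain a b s where z: "z = g ((a,b),s)" "normalized_sol D a b c" by auto
        then have n: "a > 0" "b > 0" "int a ^ 2 + D * int b ^ 2 = int c ^ 2" "gcd a (gcd b c) = 1"
          unfolding normalized_sol_def by auto
        then have "coprime a b" using gcd3_iff[OF n(3)] by simp
        then show "z \<in> ?S2" using z(1) n unfolding g_def by auto
      qed
    next
      show "?S2 \<subseteq> g ` (?Sol \<times> UNIV)"
      proof
        fix z assume "z \<in> ?S2"
        then obtain x y where z: "z = (x,y)" "x^2 + D*y^2 = (int c)^2" "coprime x y" "y > 0" by auto
        have x0: "x \<noteq> 0"
        proof
          assume "x = 0"
          then have "is_unit y" using z(3) by simp
          then have "y = 1" using z(4) by simp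
          then have "D = (int c)^2" using z(2) \<open>x = 0\<close> by simp
          then have "(int c)^2 dvd D" by simp
          then have "is_unit (int c)" using sf unfolding squarefree_def by blast
          then show False using c by simp
        qed
        define a where "a = nat \<bar>x\<bar>"
        define b where "b = nat y"
        have ab: "int a = \<bar>x\<bar>" "int b = y" unfolding a_def b_def using z(4) by auto
        have "int a ^ 2 + D * int b ^ 2 = int c ^ 2" using z(2) ab by simp
        moreover have "coprime a b" unfolding a_def b_def using z(3) z(4) by simp
        ultimately have "gcd a (gcd b c) = 1" using gcd3_iff by simp
        then have "normalized_sol D a b c" unfolding normalized_sol_def
          using \<open>int a ^ 2 + D * int b ^ 2 = int c ^ 2\<close> x0 z(4) c ab by auto
        moreover have "g ((a,b), x > 0) = z" unfolding g_def using ab z(1) by auto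
        ultimately show "z \<in> g ` (?Sol \<times> UNIV)" by force
      qed
    qed
  qed
  then have "card (?Sol \<times> (UNIV::bool set)) = card ?S2" by (rule bij_betw_same_card)
  then have "card ?S2 = card ?Sol * 2" by (simp add: card_cartesian_product)
  then show ?thesis using c2 by simp
qed

lemma necessity:
  fixes D :: int and a b c p :: nat
  assumes sf: "squarefree D" and D4: "(- D) mod 4 = 2 \<or> (- D) mod 4 = 3"
    and sol: "normalized_sol D a b c" and p: "p \<in> prime_factors c"
  shows "p \<in> S_set D"
proof -
  have n: "a > 0" "b > 0" "c > 0" "int a ^ 2 + D * int b ^ 2 = int c ^ 2" "gcd a (gcd b c) = 1"
    using sol unfolding normalized_sol_def by auto
  have pp: "prime p" "p dvd c" using p by (auto simp: in_prime_factors_iff)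
  define P where "P = int p"
  have P: "prime P" "P dvd int c" unfolding P_def using pp by auto
  have nPb: "\<not> P dvd int b"
  proof
    assume "P dvd int b"
    have "P dvd int c ^ 2" using P(2) by (simp add: power2_eq_square)
    moreover have "P dvd D * int b ^ 2" using \<open>P dvd int b\<close> by (simp add: power2_eq_square)
    ultimately have "P dvd int c ^ 2 - D * int b ^ 2" by (rule dvd_diff)
    then have "P dvd int a ^ 2" using n(4) by (metis add_diff_cancel_right')
    then have "P dvd int a" using P(1) prime_dvd_power by blast
    then have "p dvd a" "p dvd b" "p dvd c" using \<open>P dvd int b\<close> pp(2) unfolding P_def by auto
    then have "p dvd gcd a (gcd b c)" by simp
    then show False using n(5) pp(1) by simp
  qed
  have nPD: "\<not> P dvd D"
  proof
    assume "P dvd D"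
    have "P dvd int c ^ 2" using P(2) by (simp add: power2_eq_square)
    moreover have "P dvd D * int b ^ 2" using \<open>P dvd D\<close> by simp
    ultimately have "P dvd int c ^ 2 - D * int b ^ 2" by (rule dvd_diff)
    then have "P dvd int a ^ 2" using n(4) by (metis add_diff_cancel_right')
    then have "P dvd int a" using P(1) prime_dvd_power by blast
    then have "P^2 dvd int a ^ 2" "P^2 dvd int c ^ 2" using P(2) by auto
    then have "P^2 dvd int c ^ 2 - int a ^ 2" by (rule dvd_diff[rotated])
    then have "P^2 dvd D * int b ^ 2" using n(4) by (metis add_diff_cancel_left')
    moreover have "coprime (P^2) (int b ^ 2)" using P(1) nPb by (simp add: prime_imp_coprime)
    ultimately have "P^2 dvd D" by (simp add: coprime_dvd_mult_left_iff)
    then have "is_unit P" using sf unfolding squarefree_def by blast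
    then show False using P(1) not_prime_unit by blast
  qed
  have op: "odd p"
  proof
    assume "even p"
    then have "p = 2" using pp(1) by (metis prime_nat_iff dvd_def two_is_prime_nat prime_prime_factor) 
    then have "2 dvd int c" using P(2) unfolding P_def by simp
    then obtain l where l: "int c = 2 * l" by blast
    have "\<not> 2 dvd int b" using nPb \<open>p = 2\<close> unfolding P_def by simp
    then obtain j where j: "int b = 2 * j + 1" by (metis odd_two_times_div_two_succ)
    obtain i where i: "int a = 2 * i \<or> int a = 2 * i + 1" by (metis odd_two_times_div_two_succ dvd_mult_div_cancel)
    have "int a ^ 2 + D * int b ^ 2 = int a ^ 2 + D + 4 * (D * (j^2 + j))"
      unfolding j by (simp add: power2_eq_square algebra_simps)
    then have e1: "int a ^ 2 + D + 4 * (D * (j^2 + j)) = 4 * l^2" using n(4) l by (simp add: power2_eq_square)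
    have e2: "int a ^ 2 = 4 * i^2 \<or> int a ^ 2 = 4 * (i^2 + i) + 1"
      using i by (auto simp: power2_eq_square algebra_simps)
    have "\<forall>A w v u u'. A + D + 4 * w = 4 * v \<longrightarrow> (A = 4 * u \<or> A = 4 * u' + 1) \<longrightarrow> False"
      using D4 by presburger
    then show False using e1 e2 by blast
  qed
  obtain u v where uv: "u * int b + v * P = 1"
  proof -
    have "coprime (int b) P" using P(1) nPb by (simp add: prime_imp_coprime coprime_commute)
    then show ?thesis using that bezout_int[of "int b" P] by (auto simp: coprime_iff_gcd_eq_1)
  qed
  define y where "y = int a * u"
  have "y^2 + D = u^2 * (int a ^ 2 + D * int b ^ 2) + D * ((1 - u * int b) * (1 + u * int b))"
    unfolding y_def by (simp add: power2_eq_square algebra_simps)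
  also have "1 - u * int b = v * P" using uv by simp
  finally have e: "y^2 + D = u^2 * int c ^ 2 + P * (D * v * (1 + u * int b))" using n(4) by (simp add: algebra_simps)
  have "P dvd u^2 * int c ^ 2" using P(2) by (simp add: power2_eq_square)
  then have "P dvd y^2 + D" unfolding e by (simp add: dvd_add)
  then have "[y^2 = -D] (mod P)" by (simp add: cong_iff_dvd_diff)
  then have "QuadRes P (-D)" unfolding QuadRes_def by blast
  moreover have "\<not> [-D = 0] (mod P)" using nPD by (simp add: cong_0_iff)
  ultimately have "Legendre (-D) P = 1" unfolding Legendre_def by simp
  then show ?thesis unfolding S_set_def P_def using pp(1) op by simp
qed

theorem theorem4p1:
  fixes D :: int and c :: nat
  assumes "D > 1"
    and "squarefree D"
    and "(- D) mod 4 = 2 \<or> (- D) mod 4 = 3"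
    and "\<exists>n::nat. form_class_group (- 4 * D) \<cong> Z2_power n"
    and "c > 1"
  shows "((\<exists>a b. normalized_sol D a b c) \<longleftrightarrow> (\<forall>p\<in>prime_factors c. p \<in> S_set D))
       \<and> ((\<forall>p\<in>prime_factors c. p \<in> S_set D) \<longrightarrow>
            card {(a, b). normalized_sol D a b c} = 2 ^ (card (prime_factors c) - 1))"
proof -
  have B: "card {(a, b). normalized_sol D a b c} = 2 ^ (card (prime_factors c) - 1)"
    if allS: "\<forall>p\<in>prime_factors c. p \<in> S_set D"
  proof -
    have good: "\<forall>p\<in>prime_factors c. odd p \<and> \<not> int p dvd D \<and> (\<exists>x. int p dvd x^2 + D)"
      using allS S_good by blast
    have cr: "card (RR D (int c ^ 2)) = 2 ^ card (prime_factors c)"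
      by (rule count_roots) (use assms(5) good in auto)
    have oc: "odd c"
    proof
      assume "even c"
      then have "2 \<in> prime_factors c" using assms(5) by (simp add: in_prime_factors_iff)
      then show False using good by auto
    qed
    have cs: "card (RR D (int c ^ 2)) = 2 * card {(a, b). normalized_sol D a b c}"
      by (rule card_Sol[OF assms(1,2,4,5) oc])
    have "prime_factors c \<noteq> {}"
    proof
      assume "prime_factors c = {}"
      moreover obtain p where "prime p" "p dvd c" using prime_factor_nat[of c] assms(5) by auto
      then have "p \<in> prime_factors c" using assms(5) by (simp add: in_prime_factors_iff)
      ultimately show False by blast
    qed
    then have "card (prime_factors c) \<ge> 1"
      by (metis One_nat_def Suc_leI card_gt_0_iff finite_set_mset)
    then have "(2::nat) ^ card (prime_factors c) = 2 * 2 ^ (card (prime_factors c) - 1)"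
      by (metis Suc_diff_1 le_numeral_extra(2) less_le_trans power_Suc zero_less_one)
    then show ?thesis using cr cs by simp
  qed
  have "(\<exists>a b. normalized_sol D a b c) \<longleftrightarrow> (\<forall>p\<in>prime_factors c. p \<in> S_set D)"
  proof
    assume "\<exists>a b. normalized_sol D a b c"
    then obtain a b where "normalized_sol D a b c" by blast
    then show "\<forall>p\<in>prime_factors c. p \<in> S_set D" using necessity[OF assms(2,3)] by blast
  next
    assume h: "\<forall>p\<in>prime_factors c. p \<in> S_set D"
    then have "card {(a, b). normalized_sol D a b c} \<noteq> 0" using B by simp
    then have "{(a, b). normalized_sol D a b c} \<noteq> {}" by (metis card.empty)
    then show "\<exists>a b. normalized_sol D a b c" by blast
  qed
  then show ?thesis using B by blast
qed

end
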